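(* Let $\theta,\omega\in H^\infty$ be inner functions with $\theta(0)=0$ and $\omega(0)=0$. Let $u\in\mathcal K_\omega$ and $T=S_\omega+(\cdot,\overline\chi\omega)u\in\mathcal L(\mathcal K_\omega)$. Let $X\in\mathcal L(\mathcal K_\theta,\mathcal K_\omega)$ satisfy $X^\ast(\overline\chi\omega)=\overline\chi\theta$ and $XU_{(\theta)1}=TX$. Set $g=\dfrac{u-\omega}{1-\theta}$. Then $g\in\mathcal K_\omega$ and $Xf=gf$ for every $f\in\mathcal K_\theta$.
   Context: $m$ is normalized Lebesgue measure on $\mathbb T$; $H^2$ is the Hardy space of the unit disk $\mathbb D$, identified with a subspace of $L^2(m)$ via boundary values, with the $L^2(m)$ inner product. $\chi(z)=z$, $\mathbf 1(z)=1$. For an inner function $\theta$, $\mathcal K_\theta=H^2\ominus\theta H^2$; $S$ is multiplication by $\chi$ on $H^2$ and $S_\theta=P_{\mathcal K_\theta}S|_{\mathcal K_\theta}$. $\overline\chi\theta$ denotes the function $\zeta\mapsto\overline\zeta\theta(\zeta)$ on $\mathbb T$; when $\theta(0)=0$, both $\mathbf 1$ and $\overline\chi\theta$ belong to $\mathcal K_\theta$. $(\cdot,v)u$ denotes the operator $f\mapsto (f,v)u$. For $\theta(0)=0$ and $c\in\mathbb T$, $U_{(\theta)c}=S_\theta+c(\cdot,\overline\chi\theta)\mathbf 1\in\mathcal L(\mathcal K_\theta)$ (a unitary operator). *)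

theory Defs
  imports "HOL-Analysis.Analysis"
begin

text \<open>Functions on T are represented as functions complex => complex; only their
values on the unit circle matter (m is concentrated on T). m is the image of
normalized Lebesgue measure on [0, 2 pi] under t |-> exp(i t).\<close>

definition circ_measure :: "complex measure" where
  "circ_measure = distr (density lborel (\<lambda>t. ennreal (indicator {0..2*pi} t / (2*pi))))
                        borel (\<lambda>t. cis t)"

definition ae_eq :: "(complex \<Rightarrow> complex) \<Rightarrow> (complex \<Rightarrow> complex) \<Rightarrow> bool" where
  "ae_eq f g \<longleftrightarrow> (AE z in circ_measure. f z = g z)"

definition L2 :: "(complex \<Rightarrow> complex) set" where
  "L2 = {f. f \<in> borel_measurable circ_measure \<and>
            integrable circ_measure (\<lambda>z. (cmod (f z))\<^sup>2)}"

definition ip :: "(complex \<Rightarrow> complex) \<Rightarrow> (complex \<Rightarrow> complex) \<Rightarrow> complex" where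
  "ip f g = (LINT z|circ_measure. f z * cnj (g z))"

definition norm2 :: "(complex \<Rightarrow> complex) \<Rightarrow> real" where
  "norm2 f = sqrt (LINT z|circ_measure. (cmod (f z))\<^sup>2)"

text \<open>Hardy space H^2 (boundary values): L^2 functions whose Fourier coefficients
of negative index vanish; the coefficient of index -k is the integral of f z^k.\<close>
definition hardy2 :: "(complex \<Rightarrow> complex) set" where
  "hardy2 = {f \<in> L2. \<forall>k::nat. k > 0 \<longrightarrow> (LINT z|circ_measure. f z * z ^ k) = 0}"

text \<open>Inner functions, via their boundary values: elements of H^infinity
(essentially bounded, analytic: negative Fourier coefficients vanish) with
modulus 1 almost everywhere on T.\<close>
definition inner_fun :: "(complex \<Rightarrow> complex) \<Rightarrow> bool" where
  "inner_fun \<theta> \<longleftrightarrow> \<theta> \<in> borel_measurable circ_measure \<and>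
     (AE z in circ_measure. cmod (\<theta> z) = 1) \<and>
     (\<forall>k::nat. k > 0 \<longrightarrow> (LINT z|circ_measure. \<theta> z * z ^ k) = 0)"

text \<open>Value at the origin = mean of the boundary function (0-th Fourier coefficient).\<close>
definition value_at_0 :: "(complex \<Rightarrow> complex) \<Rightarrow> complex" where
  "value_at_0 \<theta> = (LINT z|circ_measure. \<theta> z)"

definition model_space :: "(complex \<Rightarrow> complex) \<Rightarrow> (complex \<Rightarrow> complex) set" where
  "model_space \<theta> = {f \<in> hardy2. \<forall>h \<in> hardy2. ip f (\<lambda>z. \<theta> z * h z) = 0}"

text \<open>Orthogonal projection onto a (closed) subspace K of L^2: the element p of K
with f - p orthogonal to K (determined up to m-a.e. equality).\<close>
definition proj :: "(complex \<Rightarrow> complex) set \<Rightarrow> (complex \<Rightarrow> complex) \<Rightarrow> (complex \<Rightarrow> complex)" where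
  "proj K f = (SOME p. p \<in> K \<and> (\<forall>k\<in>K. ip (\<lambda>z. f z - p z) k = 0))"

definition comp_shift :: "(complex \<Rightarrow> complex) \<Rightarrow> (complex \<Rightarrow> complex) \<Rightarrow> (complex \<Rightarrow> complex)" where
  "comp_shift \<theta> f = proj (model_space \<theta>) (\<lambda>z. z * f z)"

definition cchi_mult :: "(complex \<Rightarrow> complex) \<Rightarrow> (complex \<Rightarrow> complex)" where
  "cchi_mult \<theta> = (\<lambda>z. cnj z * \<theta> z)"

definition clark_U :: "(complex \<Rightarrow> complex) \<Rightarrow> complex \<Rightarrow> (complex \<Rightarrow> complex) \<Rightarrow> (complex \<Rightarrow> complex)" where
  "clark_U \<theta> c f = (\<lambda>z. comp_shift \<theta> f z + c * ip f (cchi_mult \<theta>))"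

text \<open>Bounded linear operators K1 -> K2, acting on representatives and compatible
with m-a.e. equality.\<close>
definition bounded_op ::
  "(complex \<Rightarrow> complex) set \<Rightarrow> (complex \<Rightarrow> complex) set \<Rightarrow>
   ((complex \<Rightarrow> complex) \<Rightarrow> (complex \<Rightarrow> complex)) \<Rightarrow> bool" where
  "bounded_op K1 K2 X \<longleftrightarrow>
     (\<forall>f\<in>K1. X f \<in> K2) \<and>
     (\<forall>f\<in>K1. \<forall>g\<in>K1. ae_eq f g \<longrightarrow> ae_eq (X f) (X g)) \<and>
     (\<forall>f\<in>K1. \<forall>g\<in>K1. ae_eq (X (\<lambda>z. f z + g z)) (\<lambda>z. X f z + X g z)) \<and>
     (\<forall>f\<in>K1. \<forall>c. ae_eq (X (\<lambda>z. c * f z)) (\<lambda>z. c * X f z)) \<and>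
     (\<exists>C. \<forall>f\<in>K1. norm2 (X f) \<le> C * norm2 f)"

end

theory Submission
  imports Defs
begin


lemma sets_cm[simp, measurable_cong]: "sets circ_measure = sets borel"
  unfolding circ_measure_def by simp

lemma space_cm[simp]: "space circ_measure = UNIV"
  using sets_eq_imp_space_eq[OF sets_cm] by simp

lemma measurable_cm1[simp]: "measurable circ_measure N = measurable borel N"
  by (rule measurable_cong_sets) auto

lemma deriv_cis: "((\<lambda>t. cis (c*t) / (\<i>*c)) has_vector_derivative cis (c*t)) (at t within S)"
  if "c \<noteq> 0" for c :: real
proof -
  have "((\<lambda>t. exp (\<i> * complex_of_real (c*t)) / (\<i>*c)) has_vector_derivative
        (\<i> * c * exp (\<i> * complex_of_real (c*t)) / (\<i>*c))) (at t within S)"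
    by (auto intro!: derivative_eq_intros has_vector_derivative_real_field simp: mult.commute mult.left_commute)
  then show ?thesis using that by (simp add: cis_conv_exp)
qed

lemma cis_meas[measurable]: "cis \<in> borel_measurable borel"
  by (intro borel_measurable_continuous_onI continuous_intros)

lemma dens_meas[measurable]: "(\<lambda>t::real. indicator {0..2*pi} t / (2*pi)) \<in> borel_measurable borel"
  by (intro borel_measurable_divide borel_measurable_indicator borel_measurable_const) auto

lemma dens_meas'[measurable]: "(\<lambda>t::real. indicator {0..2*pi} t / (2*pi)) \<in> borel_measurable lborel"
  using dens_meas by simp

lemma integral_cm:
  fixes f :: "complex \<Rightarrow> 'b::{banach, second_countable_topology}"
  assumes [measurable]: "f \<in> borel_measurable borel"
  shows "integral\<^sup>L circ_measure f =
    (1/(2*pi)) *\<^sub>R integral\<^sup>L lborel (\<lambda>t. indicator {0..2*pi} t *\<^sub>R f (cis t))"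
proof -
  have "integral\<^sup>L circ_measure f =
     integral\<^sup>L (density lborel (\<lambda>t. ennreal (indicator {0..2*pi} t / (2*pi)))) (\<lambda>t. f (cis t))"
    unfolding circ_measure_def by (rule integral_distr) measurable
  also have "\<dots> = integral\<^sup>L lborel (\<lambda>t. (indicator {0..2*pi} t / (2*pi)) *\<^sub>R f (cis t))"
    by (rule integral_density) (simp_all)
  also have "\<dots> = integral\<^sup>L lborel (\<lambda>t. (1/(2*pi)) *\<^sub>R (indicator {0..2*pi} t *\<^sub>R f (cis t)))"
    by (rule arg_cong[where f="integral\<^sup>L lborel"]) (auto simp: fun_eq_iff)
  also have "\<dots> = (1/(2*pi)) *\<^sub>R integral\<^sup>L lborel (\<lambda>t. indicator {0..2*pi} t *\<^sub>R f (cis t))"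
    by (rule integral_scaleR_right)
  finally show ?thesis .
qed


lemma emeasure_cm_UNIV: "emeasure circ_measure UNIV = 1"
proof -
  have "emeasure circ_measure UNIV =
     emeasure (density lborel (\<lambda>t. ennreal (indicator {0..2*pi} t / (2*pi)))) UNIV"
    unfolding circ_measure_def by (subst emeasure_distr) auto
  also have "\<dots> = (\<integral>\<^sup>+ t. ennreal (1/(2*pi)) * indicator {0..2*pi} t \<partial>lborel)"
    by (subst emeasure_density) (auto intro!: nn_integral_cong split: split_indicator)
  also have "\<dots> = ennreal (1/(2*pi)) * emeasure lborel {0..2*pi}"
    by (rule nn_integral_cmult_indicator) auto
  also have "\<dots> = 1" proof -
    have "emeasure lborel {0..2*pi} = ennreal (2*pi)" by simp
    then show ?thesis by (simp add: ennreal_mult[symmetric] del: ennreal_mult)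
  qed
  finally show ?thesis .
qed

lemma fin_cm: "finite_measure circ_measure"
  by (rule finite_measureI) (simp add: emeasure_cm_UNIV)

interpretation cm: finite_measure circ_measure by (rule fin_cm)

lemma measure_cm_UNIV[simp]: "measure circ_measure UNIV = 1"
  by (simp add: measure_def emeasure_cm_UNIV)

lemma AE_circle: "AE z in circ_measure. cmod z = 1"
proof -
  have "AE t in density lborel (\<lambda>t. ennreal (indicator {0..2*pi} t / (2*pi))). cmod (cis t) = 1"
    by simp
  then show ?thesis unfolding circ_measure_def
    by (subst AE_distr_iff) auto
qed

lemma powi_meas[measurable]: "(\<lambda>z::complex. z powi n) \<in> borel_measurable borel"
proof (cases "n \<ge> 0")
  case True
  then show ?thesis unfolding power_int_def by simp
next
  case False
  then show ?thesis unfolding power_int_def by simp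
qed


lemma integral_zpowi: "integral\<^sup>L circ_measure (\<lambda>z. z powi n) = (if n = 0 then 1 else 0)"
proof (cases "n = 0")
  case True
  then show ?thesis by simp
next
  case False
  have c: "real_of_int n \<noteq> 0" using False by simp
  have "integral\<^sup>L circ_measure (\<lambda>z. z powi n) =
    (1/(2*pi)) *\<^sub>R integral\<^sup>L lborel (\<lambda>t. indicator {0..2*pi} t *\<^sub>R cis (of_int n * t))"
    by (subst integral_cm) (auto simp: cis_power_int)
  also have "integral\<^sup>L lborel (\<lambda>t. indicator {0..2*pi} t *\<^sub>R cis (of_int n * t)) =
     cis (of_int n * (2*pi)) / (\<i> * of_int n) - cis (of_int n * 0) / (\<i> * of_int n)"
    by (rule integral_FTC_atLeastAtMost)
       (auto intro!: continuous_intros deriv_cis[OF c, simplified])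
  also have "cis (of_int n * (2*pi)) = 1"
  proof -
    have "real_of_int n * (2*pi) = (2*pi) * of_int n" by simp
    then show ?thesis using cos_int_2pin sin_int_2pin by (simp only: cis.ctr) (simp add: complex_eq_iff)
  qed
  finally show ?thesis using False by simp
qed


lemma bm_cm[simp]: "f \<in> borel_measurable circ_measure \<longleftrightarrow> f \<in> borel_measurable borel"
  by simp

lemma L2_meas[measurable_dest]: "f \<in> L2 \<Longrightarrow> f \<in> borel_measurable borel"
  unfolding L2_def by simp

lemma L2_sq_int: "f \<in> L2 \<Longrightarrow> integrable circ_measure (\<lambda>z. (cmod (f z))\<^sup>2)"
  unfolding L2_def by simp

lemma L2I: "f \<in> borel_measurable borel \<Longrightarrow> integrable circ_measure (\<lambda>z. (cmod (f z))\<^sup>2) \<Longrightarrow> f \<in> L2"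
  unfolding L2_def by simp

lemma int_bounded:
  fixes f :: "complex \<Rightarrow> 'b::{banach, second_countable_topology}"
  shows "f \<in> borel_measurable borel \<Longrightarrow> AE z in circ_measure. norm (f z) \<le> B \<Longrightarrow> integrable circ_measure f"
  by (rule cm.integrable_const_bound) auto

lemma L2_bounded: "f \<in> borel_measurable borel \<Longrightarrow> AE z in circ_measure. cmod (f z) \<le> B \<Longrightarrow> f \<in> L2"
proof (rule L2I)
  assume f: "f \<in> borel_measurable borel" and B: "AE z in circ_measure. cmod (f z) \<le> B"
  show "integrable circ_measure (\<lambda>z. (cmod (f z))\<^sup>2)"
  proof (rule int_bounded)
    show "AE z in circ_measure. norm ((cmod (f z))\<^sup>2) \<le> B\<^sup>2"
      using B
    proof eventually_elim
      case (elim z)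
      show ?case using power_mono[OF elim norm_ge_zero, of 2] by simp
    qed
  qed (use f in simp)
qed

lemma ab_le: "(a::real) * b \<le> a\<^sup>2 + b\<^sup>2" if "0 \<le> a" "0 \<le> b"
proof -
  have "0 \<le> (a - b)\<^sup>2" by simp
  then have "2 * (a * b) \<le> a\<^sup>2 + b\<^sup>2" by (simp add: power2_eq_square algebra_simps)
  moreover have "0 \<le> a * b" using that by simp
  ultimately show ?thesis by linarith
qed

lemma ab_le2: "2 * (a::real) * b \<le> a\<^sup>2 + b\<^sup>2"
proof -
  have "0 \<le> (a - b)\<^sup>2" by simp
  then show ?thesis by (simp add: power2_eq_square algebra_simps)
qed

lemma L2_integrable_mult:
  assumes f: "f \<in> L2" and g: "g \<in> L2"
  shows "integrable circ_measure (\<lambda>z. f z * g z)"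
proof (rule Bochner_Integration.integrable_bound)
  show "integrable circ_measure (\<lambda>z. (cmod (f z))\<^sup>2 + (cmod (g z))\<^sup>2)"
    using L2_sq_int[OF f] L2_sq_int[OF g] by simp
  show "(\<lambda>z. f z * g z) \<in> borel_measurable circ_measure" using L2_meas[OF f] L2_meas[OF g] by simp
  show "AE x in circ_measure. norm (f x * g x) \<le> norm ((cmod (f x))\<^sup>2 + (cmod (g x))\<^sup>2)"
  proof (rule AE_I2)
    fix x
    have "cmod (f x) * cmod (g x) \<le> (cmod (f x))\<^sup>2 + (cmod (g x))\<^sup>2"
      by (rule ab_le) auto
    then show "norm (f x * g x) \<le> norm ((cmod (f x))\<^sup>2 + (cmod (g x))\<^sup>2)"
      by (simp add: norm_mult)
  qed
qed

lemma L2_const[simp]: "(\<lambda>z. c) \<in> L2"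
  by (rule L2_bounded[where B="cmod c"]) auto

lemma L2_integrable: "f \<in> L2 \<Longrightarrow> integrable circ_measure f"
  using L2_integrable_mult[of f "\<lambda>z. 1"] by simp

lemma cnj_meas[measurable]: "cnj \<in> borel_measurable borel"
  by (intro borel_measurable_continuous_onI continuous_intros)

lemma L2_cnj: "f \<in> L2 \<Longrightarrow> (\<lambda>z. cnj (f z)) \<in> L2"
  unfolding L2_def by auto

lemma L2_bmult:
  assumes b: "b \<in> borel_measurable borel" "AE z in circ_measure. cmod (b z) \<le> B" and f: "f \<in> L2"
  shows "(\<lambda>z. b z * f z) \<in> L2"
proof (rule L2I)
  show "(\<lambda>z. b z * f z) \<in> borel_measurable borel" using b L2_meas[OF f] by simp
  show "integrable circ_measure (\<lambda>z. (cmod (b z * f z))\<^sup>2)"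
  proof (rule Bochner_Integration.integrable_bound)
    show "integrable circ_measure (\<lambda>z. B\<^sup>2 * (cmod (f z))\<^sup>2)" using L2_sq_int[OF f] by simp
    show "(\<lambda>z. (cmod (b z * f z))\<^sup>2) \<in> borel_measurable circ_measure" using b L2_meas[OF f] by simp
    show "AE x in circ_measure. norm ((cmod (b x * f x))\<^sup>2) \<le> norm (B\<^sup>2 * (cmod (f x))\<^sup>2)"
      using b(2)
    proof eventually_elim
      case (elim x)
      have "(cmod (b x))\<^sup>2 \<le> B\<^sup>2" using power_mono[OF elim norm_ge_zero, of 2] by simp
      then have "(cmod (b x))\<^sup>2 * (cmod (f x))\<^sup>2 \<le> B\<^sup>2 * (cmod (f x))\<^sup>2"
        by (rule mult_right_mono) simp
      then show ?case by (simp add: norm_mult power_mult_distrib)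
    qed
  qed
qed

lemma L2_cmult: "f \<in> L2 \<Longrightarrow> (\<lambda>z. c * f z) \<in> L2"
  using L2_bmult[of "\<lambda>z. c" "cmod c" f] by simp

lemma L2_add:
  assumes f: "f \<in> L2" and g: "g \<in> L2"
  shows "(\<lambda>z. f z + g z) \<in> L2"
proof (rule L2I)
  show "(\<lambda>z. f z + g z) \<in> borel_measurable borel" using L2_meas[OF f] L2_meas[OF g] by simp
  show "integrable circ_measure (\<lambda>z. (cmod (f z + g z))\<^sup>2)"
  proof (rule Bochner_Integration.integrable_bound)
    show "integrable circ_measure (\<lambda>z. 2 * (cmod (f z))\<^sup>2 + 2 * (cmod (g z))\<^sup>2)"
      using L2_sq_int[OF f] L2_sq_int[OF g] by simp
    show "(\<lambda>z. (cmod (f z + g z))\<^sup>2) \<in> borel_measurable circ_measure" using L2_meas[OF f] L2_meas[OF g] by simp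
    show "AE x in circ_measure. norm ((cmod (f x + g x))\<^sup>2) \<le> norm (2 * (cmod (f x))\<^sup>2 + 2 * (cmod (g x))\<^sup>2)"
    proof (rule AE_I2)
      fix x
      have "cmod (f x + g x) \<le> cmod (f x) + cmod (g x)" by (rule norm_triangle_ineq)
      then have "(cmod (f x + g x))\<^sup>2 \<le> (cmod (f x) + cmod (g x))\<^sup>2" using power_mono norm_ge_zero by blast
      also have "\<dots> \<le> 2 * (cmod (f x))\<^sup>2 + 2 * (cmod (g x))\<^sup>2"
        using ab_le2[of "cmod (f x)" "cmod (g x)"] by (simp add: power2_sum)
      finally show "norm ((cmod (f x + g x))\<^sup>2) \<le> norm (2 * (cmod (f x))\<^sup>2 + 2 * (cmod (g x))\<^sup>2)"
        by simp
    qed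
  qed
qed

lemma L2_uminus: "f \<in> L2 \<Longrightarrow> (\<lambda>z. - f z) \<in> L2"
  using L2_cmult[of f "-1"] by simp

lemma L2_diff: "f \<in> L2 \<Longrightarrow> g \<in> L2 \<Longrightarrow> (\<lambda>z. f z - g z) \<in> L2"
  using L2_add[of f "\<lambda>z. - g z"] L2_uminus[of g] by simp

lemma L2_ae: "f \<in> L2 \<Longrightarrow> g \<in> borel_measurable borel \<Longrightarrow> ae_eq f g \<Longrightarrow> g \<in> L2"
  unfolding ae_eq_def
  by (rule L2I) (auto intro: integrable_cong_AE_imp[OF L2_sq_int] elim!: AE_mp)

lemma AE_circ_inv: "AE z in circ_measure. cnj z = inverse z \<and> z \<noteq> 0 \<and> cnj z * z = 1"
  using AE_circle
proof eventually_elim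
  case (elim z)
  then have "z \<noteq> 0" by auto
  moreover have "cnj z * z = 1" using elim
    by (metis complex_norm_square mult.commute of_real_1 power_one)
  ultimately show ?case by (auto simp: field_simps)
qed


definition tp :: "(int \<times> complex) list \<Rightarrow> complex \<Rightarrow> complex" where
  "tp L z = (\<Sum>(n,c)\<leftarrow>L. c * z powi n)"

lemma tp_Nil[simp]: "tp [] z = 0" by (simp add: tp_def)
lemma tp_Cons[simp]: "tp ((n,c) # L) z = c * z powi n + tp L z" by (simp add: tp_def)
lemma tp_append[simp]: "tp (L @ M) z = tp L z + tp M z" by (simp add: tp_def)

lemma tp_scale: "tp (map (\<lambda>(n,c). (n, a * c)) L) z = a * tp L z"
  by (induction L) (auto simp: algebra_simps)

definition tp_mult :: "(int \<times> complex) list \<Rightarrow> (int \<times> complex) list \<Rightarrow> (int \<times> complex) list" where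
  "tp_mult L M = concat (map (\<lambda>(n,c). map (\<lambda>(m,d). (n+m, c*d)) M) L)"

lemma tp_mult_aux: "z \<noteq> 0 \<Longrightarrow> tp (map (\<lambda>(m,d). (n+m, c*d)) M) z = c * z powi n * tp M z"
  by (induction M) (auto simp: algebra_simps power_int_add)

lemma tp_mult: "z \<noteq> 0 \<Longrightarrow> tp (tp_mult L M) z = tp L z * tp M z"
  unfolding tp_mult_def
proof (induction L)
  case (Cons a L)
  then show ?case
  proof (cases a)
    case (Pair n c)
    have "tp (concat (map (\<lambda>(n, c). map (\<lambda>(m, d). (n + m, c * d)) M) (a # L))) z =
          tp (map (\<lambda>(m, d). (n + m, c * d)) M) z + tp (concat (map (\<lambda>(n, c). map (\<lambda>(m, d). (n + m, c * d)) M) L)) z"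
      by (simp add: Pair)
    also have "\<dots> = c * z powi n * tp M z + tp L z * tp M z"
      using Cons by (simp add: tp_mult_aux)
    finally show ?thesis by (simp add: Pair algebra_simps)
  qed
qed simp

lemma tp_meas[measurable]: "tp L \<in> borel_measurable borel"
  unfolding tp_def by (induction L) auto

lemma tp_bound: "cmod z = 1 \<Longrightarrow> cmod (tp L z) \<le> (\<Sum>(n,c)\<leftarrow>L. cmod c)"
proof (induction L)
  case (Cons a L)
  obtain n c where a: "a = (n,c)" by (cases a)
  have "cmod (z powi n) = 1" using Cons.prems by (simp add: norm_power_int)
  then have "cmod (c * z powi n + tp L z) \<le> cmod c + cmod (tp L z)"
    by (metis mult.right_neutral norm_mult norm_triangle_ineq)
  then show ?case using Cons a by simp
qed simp

lemma circ_cnj: "cmod z = 1 \<Longrightarrow> cnj z = z powi (-1)"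
proof -
  assume z: "cmod z = 1"
  have "z * cnj z = 1" using complex_norm_square[of z] z by simp
  then have "cnj z = inverse z" by (metis inverse_unique)
  then show ?thesis by (simp add: power_int_minus)
qed

lemma rpf_tp:
  assumes "real_polynomial_function p"
  shows "\<exists>L. \<forall>z. cmod z = 1 \<longrightarrow> complex_of_real (p z) = tp L z"
  using assms
proof (induction p)
  case (linear f)
  then interpret bounded_linear f .
  define a where "a = complex_of_real (f 1)"
  define b where "b = complex_of_real (f \<i>)"
  have fz: "f z = Re z * f 1 + Im z * f \<i>" for z
  proof -
    have "z = Re z *\<^sub>R 1 + Im z *\<^sub>R \<i>" by (simp add: complex_eq_iff)
    then have "f z = f (Re z *\<^sub>R 1 + Im z *\<^sub>R \<i>)" by (rule arg_cong)
    also have "\<dots> = Re z * f 1 + Im z * f \<i>" by (simp add: add scale)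
    finally show ?thesis .
  qed
  show ?case
  proof (intro exI allI impI)
    fix z :: complex assume z: "cmod z = 1"
    have re: "complex_of_real (Re z) = (z + cnj z) / 2" by (simp add: complex_eq_iff)
    have im: "complex_of_real (Im z) = (z - cnj z) / (2 * \<i>)" by (simp add: complex_eq_iff)
    have "complex_of_real (f z) = complex_of_real (Re z) * a + complex_of_real (Im z) * b"
      unfolding fz[of z] a_def b_def by simp
    also have "\<dots> = ((a - \<i> * b) / 2) * z + ((a + \<i> * b) / 2) * cnj z"
      unfolding re im by (simp add: field_simps)
    also have "\<dots> = tp [(1, (a - \<i> * b) / 2), (-1, (a + \<i> * b) / 2)] z"
      using circ_cnj[OF z] by simp
    finally show "complex_of_real (f z) = tp [(1, (a - \<i> * b) / 2), (-1, (a + \<i> * b) / 2)] z" .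
  qed
next
  case (const c)
  show ?case by (rule exI[of _ "[(0, complex_of_real c)]"]) simp
next
  case (add f g)
  then obtain L M where "\<forall>z. cmod z = 1 \<longrightarrow> complex_of_real (f z) = tp L z"
    "\<forall>z. cmod z = 1 \<longrightarrow> complex_of_real (g z) = tp M z" by blast
  then show ?case by (intro exI[of _ "L @ M"]) simp
next
  case (mult f g)
  then obtain L M where LM: "\<forall>z. cmod z = 1 \<longrightarrow> complex_of_real (f z) = tp L z"
    "\<forall>z. cmod z = 1 \<longrightarrow> complex_of_real (g z) = tp M z" by blast
  show ?case
  proof (intro exI allI impI)
    fix z :: complex assume z: "cmod z = 1"
    then have "z \<noteq> 0" by auto
    then show "complex_of_real (f z * g z) = tp (tp_mult L M) z" using LM z by (simp add: tp_mult)
  qed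
qed

lemma sw_tp:
  fixes \<phi> :: "complex \<Rightarrow> complex"
  assumes "continuous_on (sphere 0 1) \<phi>" "e > 0"
  shows "\<exists>L. \<forall>z. cmod z = 1 \<longrightarrow> cmod (\<phi> z - tp L z) < e"
proof -
  have c1: "continuous_on (sphere 0 1) (\<lambda>z. Re (\<phi> z))" and c2: "continuous_on (sphere 0 1) (\<lambda>z. Im (\<phi> z))"
    using assms(1) by (auto intro: continuous_intros)
  obtain p where p: "real_polynomial_function p" "\<And>x. x \<in> sphere 0 1 \<Longrightarrow> \<bar>Re (\<phi> x) - p x\<bar> < e/2"
    using Stone_Weierstrass_real_polynomial_function[OF compact_sphere c1, of "e/2"] assms(2) by auto
  obtain q where q: "real_polynomial_function q" "\<And>x. x \<in> sphere 0 1 \<Longrightarrow> \<bar>Im (\<phi> x) - q x\<bar> < e/2"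
    using Stone_Weierstrass_real_polynomial_function[OF compact_sphere c2, of "e/2"] assms(2) by auto
  obtain L where L: "\<forall>z. cmod z = 1 \<longrightarrow> complex_of_real (p z) = tp L z" using rpf_tp[OF p(1)] by blast
  obtain M where M: "\<forall>z. cmod z = 1 \<longrightarrow> complex_of_real (q z) = tp M z" using rpf_tp[OF q(1)] by blast
  show ?thesis
  proof (intro exI allI impI)
    fix z :: complex assume z: "cmod z = 1"
    have eq: "tp (L @ map (\<lambda>(n,c). (n, \<i> * c)) M) z = complex_of_real (p z) + \<i> * complex_of_real (q z)"
      using L M z by (simp add: tp_scale)
    have "\<phi> z - (complex_of_real (p z) + \<i> * complex_of_real (q z)) =
        complex_of_real (Re (\<phi> z) - p z) + \<i> * complex_of_real (Im (\<phi> z) - q z)"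
      by (simp add: complex_eq_iff)
    then have "cmod (\<phi> z - (complex_of_real (p z) + \<i> * complex_of_real (q z))) \<le>
        \<bar>Re (\<phi> z) - p z\<bar> + \<bar>Im (\<phi> z) - q z\<bar>"
      by (metis norm_ii norm_mult norm_of_real norm_triangle_ineq mult_1)
    also have "\<dots> < e" using p(2)[of z] q(2)[of z] z by simp
    finally show "cmod (\<phi> z - tp (L @ map (\<lambda>(n,c). (n, \<i> * c)) M) z) < e" using eq by simp
  qed
qed


lemma cont_bm: "continuous_on UNIV (f :: 'a::topological_space \<Rightarrow> 'b::topological_space) \<Longrightarrow> f \<in> borel_measurable borel"
  by (rule borel_measurable_continuous_onI)

lemma approx_indicator:
  fixes N :: "complex measure"
  assumes sN: "sets N = sets borel" and fin: "emeasure N UNIV \<noteq> \<infinity>" and A: "A \<in> sets borel" and d: "d > 0"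
  shows "\<exists>f::complex\<Rightarrow>real. continuous_on UNIV f \<and> (\<forall>x. 0 \<le> f x \<and> f x \<le> 1) \<and>
           integral\<^sup>L N (\<lambda>x. \<bar>indicator A x - f x\<bar>) < d"
proof -
  have sp: "space N = UNIV" using sets_eq_imp_space_eq[OF sN] by simp
  interpret finite_measure N by (rule finite_measureI) (use fin sp in simp)
  have fin': "emeasure N (space N) \<noteq> \<infinity>" using fin sp by simp
  have bmN: "borel_measurable N = borel_measurable borel" by (rule measurable_cong_sets[OF sN refl])
  have getU: "\<exists>U. open U \<and> B \<subseteq> U \<and> measure N U < measure N B + d/2" if B: "B \<in> sets borel" for B
  proof -
    have "emeasure N B = (INF U \<in> {U. B \<subseteq> U \<and> open U}. emeasure N U)"
      by (rule outer_regular[OF sN fin' B])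
    moreover have "emeasure N B < ennreal (measure N B + d/2)"
      using d B sN by (simp add: emeasure_eq_measure ennreal_less_iff)
    ultimately obtain U where U: "B \<subseteq> U" "open U" "emeasure N U < ennreal (measure N B + d/2)"
      by (metis (no_types, lifting) INF_less_iff mem_Collect_eq)
    have "U \<in> sets N" using U(2) sN by auto
    have "ennreal (measure N U) < ennreal (measure N B + d/2)" using U(3) by (simp only: emeasure_eq_measure)
    then have "measure N U < measure N B + d/2"
      using d by (subst (asm) ennreal_less_iff) auto
    then show ?thesis using U by blast
  qed
  obtain U where U: "open U" "A \<subseteq> U" "measure N U < measure N A + d/2" using getU[OF A] by blast
  have cA: "- A \<in> sets borel" using A by auto
  obtain V where V: "open V" "- A \<subseteq> V" "measure N V < measure N (- A) + d/2" using getU[OF cA] by blast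
  define K where "K = - V"
  have K: "closed K" "K \<subseteq> A" "K \<subseteq> U" using V U unfolding K_def by auto
  have cU: "closed (- U)" using U by auto
  have dis: "K \<inter> - U = {}" using K by auto
  obtain f :: "complex \<Rightarrow> real" where f: "continuous_on UNIV f" "\<And>x. f x \<in> closed_segment 1 0"
    "\<And>x. x \<in> K \<Longrightarrow> f x = 1" "\<And>x. x \<in> - U \<Longrightarrow> f x = 0"
    using Urysohn[OF K(1) cU dis, of 1 0] by blast
  have f01: "0 \<le> f x \<and> f x \<le> 1" for x using f(2)[of x] by (simp add: closed_segment_eq_real_ivl)
  have sets: "A \<in> sets N" "U \<in> sets N" "K \<in> sets N" "V \<in> sets N" using A U(1) K(1) V(1) sN by auto
  have bound: "\<bar>indicator A x - f x\<bar> \<le> indicator (U - K) x" for x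
  proof (cases "x \<in> K")
    case True then show ?thesis using f(3) K by (auto simp: indicator_def)
  next
    case False
    show ?thesis
    proof (cases "x \<in> U")
      case True then show ?thesis using False f01[of x] by (auto simp: indicator_def)
    next
      case nU: False then show ?thesis using f(4)[of x] U(2) by (auto simp: indicator_def)
    qed
  qed
  have fm: "f \<in> borel_measurable N" unfolding bmN by (rule cont_bm[OF f(1)])
  have i1: "integrable N (\<lambda>x. \<bar>indicator A x - f x\<bar>)"
    by (rule integrable_const_bound[where B=1]) (use f01 sets fm in \<open>auto simp: indicator_def\<close>)
  have i2: "integrable N (indicator (U - K) :: complex \<Rightarrow> real)"
    using sets by (intro integrable_real_indicator) (auto simp: emeasure_eq_measure)
  have "integral\<^sup>L N (\<lambda>x. \<bar>indicator A x - f x\<bar>) \<le> integral\<^sup>L N (indicator (U - K))"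
    by (rule integral_mono[OF i1 i2]) (use bound in auto)
  also have "\<dots> = measure N (U - K)" using sets by simp
  also have "\<dots> = measure N U - measure N K" using sets K(3) by (simp add: finite_measure_Diff)
  finally have I: "integral\<^sup>L N (\<lambda>x. \<bar>indicator A x - f x\<bar>) \<le> measure N U - measure N K" .
  have mK: "measure N K = measure N UNIV - measure N V"
    unfolding K_def using finite_measure_compl[of V] sets sp by (simp add: Compl_eq_Diff_UNIV)
  have mA: "measure N (- A) = measure N UNIV - measure N A"
    using finite_measure_compl[of A] sets sp by (simp add: Compl_eq_Diff_UNIV)
  have "integral\<^sup>L N (\<lambda>x. \<bar>indicator A x - f x\<bar>) < d" using I mK mA U(3) V(3) by linarith
  then show ?thesis using f(1) f01 by blast
qed

lemma int_diff_cont: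
  fixes N :: "complex measure"
  assumes sN: "sets N = sets borel" and fin: "emeasure N UNIV \<noteq> \<infinity>"
    and g: "integrable N g" and phi: "continuous_on UNIV \<phi>" "\<forall>z. cmod (\<phi> z) \<le> B"
  shows "integrable N (\<lambda>z. cmod (g z - \<phi> z :: complex))"
proof -
  have sp: "space N = UNIV" using sets_eq_imp_space_eq[OF sN] by simp
  interpret finite_measure N by (rule finite_measureI) (use fin sp in simp)
  have bmN: "borel_measurable N = borel_measurable borel" by (rule measurable_cong_sets[OF sN refl])
  have pm: "\<phi> \<in> borel_measurable N" unfolding bmN by (rule cont_bm[OF phi(1)])
  have "integrable N \<phi>" by (rule integrable_const_bound[where B=B]) (use phi(2) pm in auto)
  then show ?thesis using g by auto
qed

lemma approx_L1:
  fixes N :: "complex measure" and g :: "complex \<Rightarrow> complex"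
  assumes sN: "sets N = sets borel" and fin: "emeasure N UNIV \<noteq> \<infinity>"
    and g: "integrable N g"
  shows "\<forall>e>0. \<exists>\<phi> B. continuous_on UNIV \<phi> \<and> (\<forall>z. cmod (\<phi> z) \<le> B) \<and>
             integral\<^sup>L N (\<lambda>z. cmod (g z - \<phi> z)) < e"
  using g
proof (induct rule: integrable_induct)
  case (base A c)
  show ?case
  proof (intro allI impI)
    fix e :: real assume e: "e > 0"
    have A: "A \<in> sets borel" using base sN by auto
    have "cmod c + 1 > 0" by (smt (verit) norm_ge_zero)
    then have d: "e / (cmod c + 1) > 0" using e by (intro divide_pos_pos)
    obtain f :: "complex \<Rightarrow> real" where f: "continuous_on UNIV f" "\<forall>x. 0 \<le> f x \<and> f x \<le> 1"
       "integral\<^sup>L N (\<lambda>x. \<bar>indicator A x - f x\<bar>) < e / (cmod c + 1)"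
      using approx_indicator[OF sN fin A d] by blast
    define \<phi> where "\<phi> x = f x *\<^sub>R c" for x
    have cphi: "continuous_on UNIV \<phi>" unfolding \<phi>_def by (intro continuous_intros f(1))
    have bphi: "\<forall>z. cmod (\<phi> z) \<le> cmod c" unfolding \<phi>_def using f(2) by (auto simp: mult_left_le_one_le)
    have eq: "(\<lambda>z. cmod (indicator A z *\<^sub>R c - \<phi> z)) = (\<lambda>z. \<bar>indicator A z - f z\<bar> * cmod c)"
      unfolding \<phi>_def by (auto simp: fun_eq_iff scaleR_diff_left[symmetric])
    have "integral\<^sup>L N (\<lambda>z. cmod (indicator A z *\<^sub>R c - \<phi> z)) = integral\<^sup>L N (\<lambda>x. \<bar>indicator A x - f x\<bar>) * cmod c"
      unfolding eq by simp
    also have "\<dots> \<le> e / (cmod c + 1) * cmod c" using f(3) by (intro mult_right_mono) auto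
    also have "\<dots> < e"
    proof -
      have "e / (cmod c + 1) * cmod c = e * (cmod c / (cmod c + 1))" by simp
      also have "\<dots> < e * 1"
      proof (intro mult_strict_left_mono e)
        have "cmod c < cmod c + 1" by simp
        then show "cmod c / (cmod c + 1) < 1" by (subst divide_less_eq_1_pos) (auto simp: add_nonneg_pos)
      qed
      finally show ?thesis by simp
    qed
    finally show "\<exists>\<phi> B. continuous_on UNIV \<phi> \<and> (\<forall>z. cmod (\<phi> z) \<le> B) \<and>
             integral\<^sup>L N (\<lambda>z. cmod (indicator A z *\<^sub>R c - \<phi> z)) < e"
      using cphi bphi by blast
  qed
next
  case (add f g)
  show ?case
  proof (intro allI impI)
    fix e :: real assume e: "e > 0"
    obtain \<phi>1 B1 where p1: "continuous_on UNIV \<phi>1" "\<forall>z. cmod (\<phi>1 z) \<le> B1"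
      "integral\<^sup>L N (\<lambda>z. cmod (f z - \<phi>1 z)) < e/2" using add(2) e by (meson half_gt_zero)
    obtain \<phi>2 B2 where p2: "continuous_on UNIV \<phi>2" "\<forall>z. cmod (\<phi>2 z) \<le> B2"
      "integral\<^sup>L N (\<lambda>z. cmod (g z - \<phi>2 z)) < e/2" using add(4) e by (meson half_gt_zero)
    have i1: "integrable N (\<lambda>z. cmod (f z - \<phi>1 z))" by (rule int_diff_cont[OF sN fin add(1) p1(1,2)])
    have i2: "integrable N (\<lambda>z. cmod (g z - \<phi>2 z))" by (rule int_diff_cont[OF sN fin add(3) p2(1,2)])
    have c: "continuous_on UNIV (\<lambda>z. \<phi>1 z + \<phi>2 z)" using p1(1) p2(1) by (intro continuous_intros)
    have b: "\<forall>z. cmod (\<phi>1 z + \<phi>2 z) \<le> B1 + B2"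
      using p1(2) p2(2) by (metis add_mono norm_triangle_le)
    have i3: "integrable N (\<lambda>z. cmod (f z + g z - (\<phi>1 z + \<phi>2 z)))"
      using int_diff_cont[OF sN fin _ c b] add(1,3) by auto
    have "integral\<^sup>L N (\<lambda>z. cmod (f z + g z - (\<phi>1 z + \<phi>2 z))) \<le>
          integral\<^sup>L N (\<lambda>z. cmod (f z - \<phi>1 z) + cmod (g z - \<phi>2 z))"
    proof (rule integral_mono[OF i3])
      show "integrable N (\<lambda>z. cmod (f z - \<phi>1 z) + cmod (g z - \<phi>2 z))" using i1 i2 by auto
      fix z
      have "f z + g z - (\<phi>1 z + \<phi>2 z) = (f z - \<phi>1 z) + (g z - \<phi>2 z)" by simp
      then show "cmod (f z + g z - (\<phi>1 z + \<phi>2 z)) \<le> cmod (f z - \<phi>1 z) + cmod (g z - \<phi>2 z)"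
        by (metis norm_triangle_ineq)
    qed
    also have "\<dots> = integral\<^sup>L N (\<lambda>z. cmod (f z - \<phi>1 z)) + integral\<^sup>L N (\<lambda>z. cmod (g z - \<phi>2 z))"
      using i1 i2 by (rule Bochner_Integration.integral_add)
    also have "\<dots> < e" using p1(3) p2(3) by simp
    finally show "\<exists>\<phi> B. continuous_on UNIV \<phi> \<and> (\<forall>z. cmod (\<phi> z) \<le> B) \<and>
             integral\<^sup>L N (\<lambda>z. cmod (f z + g z - \<phi> z)) < e"
      using c b by blast
  qed
next
  case (lim f s)
  show ?case
  proof (intro allI impI)
    fix e :: real assume e: "e > 0"
    have sp: "space N = UNIV" using sets_eq_imp_space_eq[OF sN] by simp
    have fm: "f \<in> borel_measurable N" using lim(5) by auto
    have sm: "\<And>i. s i \<in> borel_measurable N" using lim(1) by auto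
    have "(\<lambda>i. integral\<^sup>L N (\<lambda>z. cmod (f z - s i z))) \<longlonglongrightarrow> integral\<^sup>L N (\<lambda>z. 0::real)"
    proof (rule integral_dominated_convergence[where w="\<lambda>z. 3 * cmod (f z)"])
      show "(\<lambda>z. 0::real) \<in> borel_measurable N" by simp
      show "(\<lambda>z. cmod (f z - s i z)) \<in> borel_measurable N" for i using fm sm by auto
      show "integrable N (\<lambda>z. 3 * cmod (f z))" using lim(5) by auto
      show "AE z in N. (\<lambda>i. cmod (f z - s i z)) \<longlonglongrightarrow> 0"
      proof (rule AE_I2)
        fix z assume "z \<in> space N"
        then have "(\<lambda>i. s i z) \<longlonglongrightarrow> f z" using lim(3) by auto
        then have "(\<lambda>i. f z - s i z) \<longlonglongrightarrow> f z - f z" by (intro tendsto_intros)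
        then have "(\<lambda>i. cmod (f z - s i z)) \<longlonglongrightarrow> cmod (f z - f z)" by (rule tendsto_norm)
        then show "(\<lambda>i. cmod (f z - s i z)) \<longlonglongrightarrow> 0" by simp
      qed
      show "AE z in N. norm (cmod (f z - s i z)) \<le> 3 * cmod (f z)" for i
      proof (rule AE_I2)
        fix z assume z: "z \<in> space N"
        have "cmod (f z - s i z) \<le> cmod (f z) + cmod (s i z)" by (rule norm_triangle_ineq4)
        also have "\<dots> \<le> 3 * cmod (f z)" using lim(4)[OF z, of i] by simp
        finally show "norm (cmod (f z - s i z)) \<le> 3 * cmod (f z)" by simp
      qed
    qed
    then have "(\<lambda>i. integral\<^sup>L N (\<lambda>z. cmod (f z - s i z))) \<longlonglongrightarrow> 0" by simp
    then obtain i where i: "integral\<^sup>L N (\<lambda>z. cmod (f z - s i z)) < e/2"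
      using e by (metis (no_types, lifting) LIMSEQ_D diff_zero half_gt_zero le_refl real_norm_def abs_less_iff)
    obtain \<phi> B where p: "continuous_on UNIV \<phi>" "\<forall>z. cmod (\<phi> z) \<le> B"
      "integral\<^sup>L N (\<lambda>z. cmod (s i z - \<phi> z)) < e/2" using lim(2)[of i] e by (meson half_gt_zero)
    have i1: "integrable N (\<lambda>z. cmod (s i z - \<phi> z))" by (rule int_diff_cont[OF sN fin lim(1) p(1,2)])
    have i2: "integrable N (\<lambda>z. cmod (f z - s i z))" using lim(1,5) by auto
    have i3: "integrable N (\<lambda>z. cmod (f z - \<phi> z))" by (rule int_diff_cont[OF sN fin lim(5) p(1,2)])
    have "integral\<^sup>L N (\<lambda>z. cmod (f z - \<phi> z)) \<le>
          integral\<^sup>L N (\<lambda>z. cmod (f z - s i z) + cmod (s i z - \<phi> z))"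
    proof (rule integral_mono[OF i3])
      show "integrable N (\<lambda>z. cmod (f z - s i z) + cmod (s i z - \<phi> z))" using i1 i2 by auto
      fix z
      show "cmod (f z - \<phi> z) \<le> cmod (f z - s i z) + cmod (s i z - \<phi> z)"
        by (rule norm_diff_triangle_le[where y="s i z"]) simp_all
    qed
    also have "\<dots> = integral\<^sup>L N (\<lambda>z. cmod (f z - s i z)) + integral\<^sup>L N (\<lambda>z. cmod (s i z - \<phi> z))"
      using i2 i1 by (rule Bochner_Integration.integral_add)
    also have "\<dots> < e" using i p(3) by simp
    finally show "\<exists>\<phi> B. continuous_on UNIV \<phi> \<and> (\<forall>z. cmod (\<phi> z) \<le> B) \<and>
             integral\<^sup>L N (\<lambda>z. cmod (f z - \<phi> z)) < e"
      using p(1,2) by blast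
  qed
qed


lemma int_bmult:
  assumes F: "integrable circ_measure F" and b: "b \<in> borel_measurable borel" "AE z in circ_measure. cmod (b z) \<le> B"
  shows "integrable circ_measure (\<lambda>z. F z * b z)"
proof (rule Bochner_Integration.integrable_bound)
  show "integrable circ_measure (\<lambda>z. complex_of_real \<bar>B\<bar> * F z)" using F by auto
  show "(\<lambda>z. F z * b z) \<in> borel_measurable circ_measure" using F b(1) by auto
  show "AE z in circ_measure. norm (F z * b z) \<le> norm (complex_of_real \<bar>B\<bar> * F z)"
    using b(2)
  proof eventually_elim
    case (elim z)
    have "cmod (F z) * cmod (b z) \<le> cmod (F z) * \<bar>B\<bar>" using elim by (intro mult_left_mono) auto
    then show ?case by (simp add: norm_mult mult.commute)
  qed
qed

lemma AE_tp_bound: "AE z in circ_measure. cmod (tp L z) \<le> (\<Sum>(n,c)\<leftarrow>L. cmod c)"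
  using AE_circle by eventually_elim (rule tp_bound)

lemma AE_zpowi_bound: "AE z in circ_measure. cmod (z powi n) \<le> 1"
  using AE_circle by eventually_elim (simp add: norm_power_int)

lemma int_F_tp:
  assumes F: "integrable circ_measure F" and c: "\<And>n. integral\<^sup>L circ_measure (\<lambda>z. F z * z powi n) = 0"
  shows "integral\<^sup>L circ_measure (\<lambda>z. F z * tp L z) = 0"
proof (induction L)
  case Nil then show ?case by simp
next
  case (Cons a L)
  obtain n c where a: "a = (n, c)" by (cases a)
  have i1: "integrable circ_measure (\<lambda>z. F z * z powi n)" by (rule int_bmult[OF F _ AE_zpowi_bound]) simp
  have i2: "integrable circ_measure (\<lambda>z. F z * tp L z)" by (rule int_bmult[OF F _ AE_tp_bound]) simp
  have "(\<lambda>z. F z * tp (a # L) z) = (\<lambda>z. c * (F z * z powi n) + F z * tp L z)"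
    by (auto simp: a algebra_simps)
  then have "integral\<^sup>L circ_measure (\<lambda>z. F z * tp (a # L) z) =
     integral\<^sup>L circ_measure (\<lambda>z. c * (F z * z powi n)) + integral\<^sup>L circ_measure (\<lambda>z. F z * tp L z)"
    using i1 i2 by (simp add: Bochner_Integration.integral_add)
  also have "\<dots> = 0" using Cons c[of n] by simp
  finally show ?case .
qed

lemma cont_int_zero:
  assumes F: "integrable circ_measure F" and c: "\<And>n. integral\<^sup>L circ_measure (\<lambda>z. F z * z powi n) = 0"
    and phi: "continuous_on UNIV \<phi>" "\<forall>z. cmod (\<phi> z) \<le> B"
  shows "integral\<^sup>L circ_measure (\<lambda>z. F z * \<phi> z) = 0"
proof -
  have pm: "\<phi> \<in> borel_measurable borel" by (rule cont_bm[OF phi(1)])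
  have ip: "integrable circ_measure (\<lambda>z. F z * \<phi> z)" by (rule int_bmult[OF F pm]) (use phi(2) in auto)
  have iF: "integrable circ_measure (\<lambda>z. cmod (F z))" using F by auto
  have bound: "cmod (integral\<^sup>L circ_measure (\<lambda>z. F z * \<phi> z)) \<le> e * integral\<^sup>L circ_measure (\<lambda>z. cmod (F z))"
    if e: "e > 0" for e
  proof -
    have cs: "continuous_on (sphere 0 1) \<phi>" using phi(1) by (rule continuous_on_subset) simp
    obtain L where L: "\<forall>z. cmod z = 1 \<longrightarrow> cmod (\<phi> z - tp L z) < e" using sw_tp[OF cs e] by blast
    have it: "integrable circ_measure (\<lambda>z. F z * tp L z)" by (rule int_bmult[OF F _ AE_tp_bound]) simp
    have "integral\<^sup>L circ_measure (\<lambda>z. F z * \<phi> z) =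
        integral\<^sup>L circ_measure (\<lambda>z. F z * \<phi> z) - integral\<^sup>L circ_measure (\<lambda>z. F z * tp L z)"
      using int_F_tp[OF F c] by simp
    also have "\<dots> = integral\<^sup>L circ_measure (\<lambda>z. F z * \<phi> z - F z * tp L z)"
      using ip it by (rule Bochner_Integration.integral_diff[symmetric])
    also have "\<dots> = integral\<^sup>L circ_measure (\<lambda>z. F z * (\<phi> z - tp L z))"
      by (simp add: right_diff_distrib)
    finally have eq: "integral\<^sup>L circ_measure (\<lambda>z. F z * \<phi> z) = integral\<^sup>L circ_measure (\<lambda>z. F z * (\<phi> z - tp L z))" .
    have "cmod (integral\<^sup>L circ_measure (\<lambda>z. F z * (\<phi> z - tp L z))) \<le>
        integral\<^sup>L circ_measure (\<lambda>z. cmod (F z * (\<phi> z - tp L z)))"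
      by (rule integral_norm_bound)
    also have "\<dots> \<le> integral\<^sup>L circ_measure (\<lambda>z. e * cmod (F z))"
    proof (rule integral_mono_AE)
      show "integrable circ_measure (\<lambda>z. cmod (F z * (\<phi> z - tp L z)))"
        using ip it by (simp add: algebra_simps)
      show "integrable circ_measure (\<lambda>z. e * cmod (F z))" using iF by simp
      show "AE z in circ_measure. cmod (F z * (\<phi> z - tp L z)) \<le> e * cmod (F z)"
        using AE_circle
      proof eventually_elim
        case (elim z)
        have "cmod (F z) * cmod (\<phi> z - tp L z) \<le> cmod (F z) * e"
          using L elim by (intro mult_left_mono) auto
        then show ?case by (simp add: norm_mult mult.commute)
      qed
    qed
    also have "\<dots> = e * integral\<^sup>L circ_measure (\<lambda>z. cmod (F z))" by simp
    finally show ?thesis using eq by simp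
  qed
  have "cmod (integral\<^sup>L circ_measure (\<lambda>z. F z * \<phi> z)) \<le> 0"
  proof (rule field_le_epsilon)
    fix e :: real assume e: "e > 0"
    define I where "I = integral\<^sup>L circ_measure (\<lambda>z. cmod (F z))"
    have I: "I \<ge> 0" unfolding I_def by simp
    have "cmod (integral\<^sup>L circ_measure (\<lambda>z. F z * \<phi> z)) \<le> (e / (I + 1)) * I"
      using bound[of "e / (I + 1)"] e I unfolding I_def by (simp add: add_nonneg_pos)
    also have "\<dots> \<le> e" using e I by (simp add: field_simps)
    finally show "cmod (integral\<^sup>L circ_measure (\<lambda>z. F z * \<phi> z)) \<le> 0 + e" by simp
  qed
  then show ?thesis by simp
qed

lemma sgn_meas[measurable]: "(sgn :: complex \<Rightarrow> complex) \<in> borel_measurable borel"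
  unfolding sgn_div_norm by measurable

lemma fourier_unique:
  assumes F: "integrable circ_measure F" and c: "\<And>n. integral\<^sup>L circ_measure (\<lambda>z. F z * z powi n) = 0"
  shows "AE z in circ_measure. F z = 0"
proof -
  define N where "N = density circ_measure (\<lambda>z. ennreal (cmod (F z)))"
  have Fm: "F \<in> borel_measurable borel" using F by auto
  have sN: "sets N = sets borel" unfolding N_def by simp
  have "emeasure N UNIV = (\<integral>\<^sup>+ z. ennreal (cmod (F z)) * indicator UNIV z \<partial>circ_measure)"
    unfolding N_def by (rule emeasure_density) (use Fm in auto)
  also have "\<dots> = (\<integral>\<^sup>+ z. ennreal (cmod (F z)) \<partial>circ_measure)" by simp
  also have "\<dots> < \<infinity>" using F unfolding integrable_iff_bounded by simp
  finally have fin: "emeasure N UNIV \<noteq> \<infinity>" by simp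
  define b where "b z = cnj (sgn (F z))" for z
  have bm: "b \<in> borel_measurable borel" unfolding b_def using Fm by measurable
  have bb: "cmod (b z) \<le> 1" for z unfolding b_def by (simp add: norm_sgn)
  have fb: "F z * b z = complex_of_real (cmod (F z))" for z
  proof (cases "F z = 0")
    case False
    have "F z * cnj (F z) = complex_of_real ((cmod (F z))\<^sup>2)" using complex_norm_square[of "F z"] by simp
    then show ?thesis unfolding b_def using False
      by (simp add: sgn_div_norm scaleR_conv_of_real power2_eq_square field_simps)
  qed (simp add: b_def)
  have ib: "integrable circ_measure (\<lambda>z. F z * b z)" by (rule int_bmult[OF F bm, of 1]) (use bb in auto)
  have ibN: "integrable N b"
    unfolding N_def
  proof (subst integrable_density)
    show "integrable circ_measure (\<lambda>z. cmod (F z) *\<^sub>R b z)"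
    proof -
      have "integrable circ_measure (\<lambda>z. complex_of_real (cmod (F z)) * b z)"
        by (rule int_bmult[OF _ bm, of _ 1]) (use F bb in auto)
      then show ?thesis by (simp add: scaleR_conv_of_real)
    qed
  qed (use Fm bm in auto)
  have iF: "integrable circ_measure (\<lambda>z. cmod (F z))" using F by auto
  have small: "integral\<^sup>L circ_measure (\<lambda>z. cmod (F z)) \<le> e" if e: "e > 0" for e
  proof -
    obtain \<phi> B where p: "continuous_on UNIV \<phi>" "\<forall>z. cmod (\<phi> z) \<le> B"
        "integral\<^sup>L N (\<lambda>z. cmod (b z - \<phi> z)) < e"
      using approx_L1[OF sN fin ibN] e by blast
    have pm: "\<phi> \<in> borel_measurable borel" by (rule cont_bm[OF p(1)])
    have ip: "integrable circ_measure (\<lambda>z. F z * \<phi> z)" by (rule int_bmult[OF F pm]) (use p(2) in auto)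
    have z: "integral\<^sup>L circ_measure (\<lambda>z. F z * \<phi> z) = 0" by (rule cont_int_zero[OF F c p(1,2)])
    have eqN: "integral\<^sup>L N (\<lambda>z. cmod (b z - \<phi> z)) =
        integral\<^sup>L circ_measure (\<lambda>z. cmod (F z) *\<^sub>R cmod (b z - \<phi> z))"
      unfolding N_def by (rule integral_density) (use bm pm Fm in auto)
    have "complex_of_real (integral\<^sup>L circ_measure (\<lambda>z. cmod (F z))) = integral\<^sup>L circ_measure (\<lambda>z. F z * b z)"
      by (simp add: fb)
    also have "\<dots> = integral\<^sup>L circ_measure (\<lambda>z. F z * b z) - integral\<^sup>L circ_measure (\<lambda>z. F z * \<phi> z)"
      using z by simp
    also have "\<dots> = integral\<^sup>L circ_measure (\<lambda>z. F z * b z - F z * \<phi> z)"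
      using ib ip by (rule Bochner_Integration.integral_diff[symmetric])
    also have "\<dots> = integral\<^sup>L circ_measure (\<lambda>z. F z * (b z - \<phi> z))"
      by (simp add: right_diff_distrib)
    finally have eq: "complex_of_real (integral\<^sup>L circ_measure (\<lambda>z. cmod (F z))) =
        integral\<^sup>L circ_measure (\<lambda>z. F z * (b z - \<phi> z))" .
    have "integral\<^sup>L circ_measure (\<lambda>z. cmod (F z)) \<le> cmod (complex_of_real (integral\<^sup>L circ_measure (\<lambda>z. cmod (F z))))"
      by simp
    also have "\<dots> \<le> integral\<^sup>L circ_measure (\<lambda>z. cmod (F z * (b z - \<phi> z)))"
      unfolding eq by (rule integral_norm_bound)
    also have "\<dots> = integral\<^sup>L circ_measure (\<lambda>z. cmod (F z) *\<^sub>R cmod (b z - \<phi> z))"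
      by (simp add: norm_mult)
    also have "\<dots> < e" using eqN p(3) by simp
    finally show ?thesis by simp
  qed
  have "integral\<^sup>L circ_measure (\<lambda>z. cmod (F z)) \<le> 0"
    by (rule field_le_epsilon) (use small in simp)
  moreover have "integral\<^sup>L circ_measure (\<lambda>z. cmod (F z)) \<ge> 0" by simp
  ultimately have "integral\<^sup>L circ_measure (\<lambda>z. cmod (F z)) = 0" by simp
  then have "AE z in circ_measure. cmod (F z) = 0"
    using integral_nonneg_eq_0_iff_AE[OF iF] by simp
  then show ?thesis by simp
qed


lemma tp_L2: "tp L \<in> L2"
  by (rule L2_bounded[OF tp_meas AE_tp_bound])

lemma sq_triangle: "(cmod (a - c))\<^sup>2 \<le> 2 * (cmod (a - b))\<^sup>2 + 2 * (cmod (b - c))\<^sup>2"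
proof -
  have "cmod (a - c) \<le> cmod (a - b) + cmod (b - c)" by (rule norm_diff_triangle_le[where y=b]) simp_all
  then have "(cmod (a - c))\<^sup>2 \<le> (cmod (a - b) + cmod (b - c))\<^sup>2"
    using power_mono norm_ge_zero by blast
  also have "\<dots> \<le> 2 * (cmod (a - b))\<^sup>2 + 2 * (cmod (b - c))\<^sup>2"
    using ab_le2[of "cmod (a - b)" "cmod (b - c)"] by (simp add: power2_sum)
  finally show ?thesis .
qed

lemma L2_density:
  assumes h: "h \<in> L2" and e: "e > 0"
  shows "\<exists>L. integral\<^sup>L circ_measure (\<lambda>z. (cmod (h z - tp L z))\<^sup>2) < e"
proof -
  have hm: "h \<in> borel_measurable borel" using h by (rule L2_meas)
  define hM where "hM M z = (if cmod (h z) \<le> real M then h z else 0)" for M :: nat and z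
  have hMm: "hM M \<in> borel_measurable borel" for M unfolding hM_def using hm by measurable
  have hMb: "cmod (hM M z) \<le> real M" for M z unfolding hM_def by auto
  have hML2: "hM M \<in> L2" for M by (rule L2_bounded[OF hMm, of _ "real M"]) (use hMb in auto)
  have "(\<lambda>M. integral\<^sup>L circ_measure (\<lambda>z. (cmod (h z - hM M z))\<^sup>2)) \<longlonglongrightarrow> integral\<^sup>L circ_measure (\<lambda>z. 0::real)"
  proof (rule integral_dominated_convergence[where w="\<lambda>z. (cmod (h z))\<^sup>2"])
    show "(\<lambda>z. 0::real) \<in> borel_measurable circ_measure" by simp
    show "(\<lambda>z. (cmod (h z - hM M z))\<^sup>2) \<in> borel_measurable circ_measure" for M using hm hMm by simp
    show "integrable circ_measure (\<lambda>z. (cmod (h z))\<^sup>2)" by (rule L2_sq_int[OF h])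
    show "AE z in circ_measure. (\<lambda>M. (cmod (h z - hM M z))\<^sup>2) \<longlonglongrightarrow> 0"
    proof (rule AE_I2)
      fix z
      have "eventually (\<lambda>M. (cmod (h z - hM M z))\<^sup>2 = 0) sequentially"
        unfolding eventually_sequentially
      proof (intro exI allI impI)
        fix M assume "nat \<lceil>cmod (h z)\<rceil> \<le> M"
        then have "cmod (h z) \<le> real M" by linarith
        then show "(cmod (h z - hM M z))\<^sup>2 = 0" unfolding hM_def by simp
      qed
      then show "(\<lambda>M. (cmod (h z - hM M z))\<^sup>2) \<longlonglongrightarrow> 0" by (rule tendsto_eventually)
    qed
    show "AE z in circ_measure. norm ((cmod (h z - hM M z))\<^sup>2) \<le> (cmod (h z))\<^sup>2" for M
      by (rule AE_I2) (simp add: hM_def)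
  qed
  then have "(\<lambda>M. integral\<^sup>L circ_measure (\<lambda>z. (cmod (h z - hM M z))\<^sup>2)) \<longlonglongrightarrow> 0" by simp
  then obtain M where M: "integral\<^sup>L circ_measure (\<lambda>z. (cmod (h z - hM M z))\<^sup>2) < e/4"
    using e by (metis (no_types, lifting) LIMSEQ_D diff_zero le_refl real_norm_def abs_less_iff divide_pos_pos zero_less_numeral)
  define C where "C = 2 * real M + 1"
  have C: "C \<ge> 1" unfolding C_def by simp
  define \<eta> where "\<eta> = e / (8 * C)"
  have eta: "\<eta> > 0" unfolding \<eta>_def using e C by simp
  have fin: "emeasure circ_measure UNIV \<noteq> \<infinity>" by (simp add: emeasure_cm_UNIV)
  have ig: "integrable circ_measure (hM M)" by (rule L2_integrable[OF hML2])
  obtain \<phi> B where p: "continuous_on UNIV \<phi>" "\<forall>z. cmod (\<phi> z) \<le> B"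
      "integral\<^sup>L circ_measure (\<lambda>z. cmod (hM M z - \<phi> z)) < \<eta>"
    using approx_L1[OF sets_cm fin ig] eta by blast
  define S where "S = cball (0::complex) (real M)"
  have S: "convex S" "closed S" "S \<noteq> {}" unfolding S_def by auto
  define \<psi> where "\<psi> z = closest_point S (\<phi> z)" for z
  have cpsi: "continuous_on UNIV \<psi>" unfolding \<psi>_def
    by (rule continuous_on_compose2[OF continuous_on_closest_point[OF S] p(1)]) auto
  have bpsi: "cmod (\<psi> z) \<le> real M" for z
    using closest_point_in_set[OF S(2,3), of "\<phi> z"] unfolding \<psi>_def S_def by auto
  have dpsi: "cmod (hM M z - \<psi> z) \<le> cmod (hM M z - \<phi> z)" for z
  proof -
    have "hM M z \<in> S" using hMb[of M z] unfolding S_def by auto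
    then have "hM M z = closest_point S (hM M z)" by (simp add: closest_point_self)
    then have "dist (hM M z) (\<psi> z) = dist (closest_point S (hM M z)) (closest_point S (\<phi> z))"
      unfolding \<psi>_def by simp
    also have "\<dots> \<le> dist (hM M z) (\<phi> z)" by (rule closest_point_lipschitz[OF S])
    finally show ?thesis by (simp add: dist_norm)
  qed
  have cs: "continuous_on (sphere 0 1) \<psi>" using cpsi by (rule continuous_on_subset) simp
  have me: "min 1 \<eta> > 0" using eta by simp
  obtain L where L: "\<forall>z. cmod z = 1 \<longrightarrow> cmod (\<psi> z - tp L z) < min 1 \<eta>"
    using sw_tp[OF cs me] by blast
  have ipd: "integrable circ_measure (\<lambda>z. cmod (hM M z - \<phi> z))"
    by (rule int_diff_cont[OF sets_cm fin ig p(1,2)])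
  have part2: "integral\<^sup>L circ_measure (\<lambda>z. (cmod (hM M z - tp L z))\<^sup>2) \<le>
      integral\<^sup>L circ_measure (\<lambda>z. C * (cmod (hM M z - \<phi> z) + \<eta>))"
  proof (rule integral_mono_AE)
    show "integrable circ_measure (\<lambda>z. (cmod (hM M z - tp L z))\<^sup>2)"
      by (rule L2_sq_int[OF L2_diff[OF hML2 tp_L2]])
    show "integrable circ_measure (\<lambda>z. C * (cmod (hM M z - \<phi> z) + \<eta>))" using ipd by simp
    show "AE z in circ_measure. (cmod (hM M z - tp L z))\<^sup>2 \<le> C * (cmod (hM M z - \<phi> z) + \<eta>)"
      using AE_circle
    proof eventually_elim
      case (elim z)
      have d1: "cmod (\<psi> z - tp L z) < min 1 \<eta>" using L elim by blast
      have t: "cmod (hM M z - tp L z) \<le> cmod (hM M z - \<psi> z) + cmod (\<psi> z - tp L z)"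
        by (rule norm_diff_triangle_le[where y="\<psi> z"]) simp_all
      have a: "cmod (hM M z - tp L z) \<le> cmod (hM M z - \<phi> z) + \<eta>" using t d1 dpsi[of z] by linarith
      have "cmod (hM M z - \<psi> z) \<le> cmod (hM M z) + cmod (\<psi> z)" by (rule norm_triangle_ineq4)
      then have b: "cmod (hM M z - tp L z) \<le> C" using t d1 hMb[of M z] bpsi[of z] unfolding C_def by linarith
      have "(cmod (hM M z - tp L z))\<^sup>2 = cmod (hM M z - tp L z) * cmod (hM M z - tp L z)"
        by (simp add: power2_eq_square)
      also have "\<dots> \<le> C * (cmod (hM M z - \<phi> z) + \<eta>)"
        using a b C by (intro mult_mono) auto
      finally show ?case .
    qed
  qed
  also have "\<dots> = C * (integral\<^sup>L circ_measure (\<lambda>z. cmod (hM M z - \<phi> z)) + \<eta>)"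
    using ipd by (simp add: Bochner_Integration.integral_add)
  also have "\<dots> \<le> C * (2 * \<eta>)" using p(3) C by (intro mult_left_mono) auto
  also have "\<dots> = e / 4" unfolding \<eta>_def using C by (simp add: field_simps)
  finally have part2': "integral\<^sup>L circ_measure (\<lambda>z. (cmod (hM M z - tp L z))\<^sup>2) \<le> e / 4" .
  have "integral\<^sup>L circ_measure (\<lambda>z. (cmod (h z - tp L z))\<^sup>2) \<le>
      integral\<^sup>L circ_measure (\<lambda>z. 2 * (cmod (h z - hM M z))\<^sup>2 + 2 * (cmod (hM M z - tp L z))\<^sup>2)"
  proof (rule integral_mono)
    show "integrable circ_measure (\<lambda>z. (cmod (h z - tp L z))\<^sup>2)"
      by (rule L2_sq_int[OF L2_diff[OF h tp_L2]])
    show "integrable circ_measure (\<lambda>z. 2 * (cmod (h z - hM M z))\<^sup>2 + 2 * (cmod (hM M z - tp L z))\<^sup>2)"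
      using L2_sq_int[OF L2_diff[OF h hML2]] L2_sq_int[OF L2_diff[OF hML2 tp_L2]] by simp
    show "(cmod (h z - tp L z))\<^sup>2 \<le> 2 * (cmod (h z - hM M z))\<^sup>2 + 2 * (cmod (hM M z - tp L z))\<^sup>2" for z
      by (rule sq_triangle)
  qed
  also have "\<dots> = 2 * integral\<^sup>L circ_measure (\<lambda>z. (cmod (h z - hM M z))\<^sup>2) +
      2 * integral\<^sup>L circ_measure (\<lambda>z. (cmod (hM M z - tp L z))\<^sup>2)"
    using L2_sq_int[OF L2_diff[OF h hML2]] L2_sq_int[OF L2_diff[OF hML2 tp_L2]]
    by (simp add: Bochner_Integration.integral_add)
  also have "\<dots> < e" using M part2' by linarith
  finally show ?thesis by blast
qed


declare complex_cnj_power_int[simp del]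

lemma hardy2_L2: "f \<in> hardy2 \<Longrightarrow> f \<in> L2" unfolding hardy2_def by simp
lemma hardy2_coef: "f \<in> hardy2 \<Longrightarrow> k > 0 \<Longrightarrow> integral\<^sup>L circ_measure (\<lambda>z. f z * z ^ k) = 0"
  unfolding hardy2_def by simp

lemma sq_cmod_c: "complex_of_real ((cmod w)\<^sup>2) = w * cnj w"
  using complex_norm_square[of w] by simp

lemma pyth:
  assumes x: "x \<in> L2" and y: "y \<in> L2" and o: "integral\<^sup>L circ_measure (\<lambda>z. x z * cnj (y z)) = 0"
  shows "integral\<^sup>L circ_measure (\<lambda>z. (cmod (x z - y z))\<^sup>2) =
         integral\<^sup>L circ_measure (\<lambda>z. (cmod (x z))\<^sup>2) + integral\<^sup>L circ_measure (\<lambda>z. (cmod (y z))\<^sup>2)"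
proof -
  have cy: "(\<lambda>z. cnj (y z)) \<in> L2" "(\<lambda>z. cnj (x z)) \<in> L2" using L2_cnj x y by auto
  have i1: "integrable circ_measure (\<lambda>z. x z * cnj (x z))" using L2_integrable_mult[OF x cy(2)] .
  have i2: "integrable circ_measure (\<lambda>z. y z * cnj (y z))" using L2_integrable_mult[OF y cy(1)] .
  have i3: "integrable circ_measure (\<lambda>z. x z * cnj (y z))" using L2_integrable_mult[OF x cy(1)] .
  have i4: "integrable circ_measure (\<lambda>z. y z * cnj (x z))" using L2_integrable_mult[OF y cy(2)] .
  have o2: "integral\<^sup>L circ_measure (\<lambda>z. y z * cnj (x z)) = 0"
  proof -
    have "integral\<^sup>L circ_measure (\<lambda>z. y z * cnj (x z)) = integral\<^sup>L circ_measure (\<lambda>z. cnj (x z * cnj (y z)))"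
      by (simp add: mult.commute)
    also have "\<dots> = 0" using o by (simp del: complex_cnj_mult)
    finally show ?thesis .
  qed
  have pw: "complex_of_real ((cmod (x z - y z))\<^sup>2) =
      (x z * cnj (x z) + y z * cnj (y z)) - (x z * cnj (y z) + y z * cnj (x z))" for z
    unfolding sq_cmod_c by (simp add: algebra_simps)
  have "complex_of_real (integral\<^sup>L circ_measure (\<lambda>z. (cmod (x z - y z))\<^sup>2)) =
      integral\<^sup>L circ_measure (\<lambda>z. (x z * cnj (x z) + y z * cnj (y z)) - (x z * cnj (y z) + y z * cnj (x z)))"
    unfolding integral_complex_of_real[symmetric] pw ..
  also have "\<dots> = (integral\<^sup>L circ_measure (\<lambda>z. x z * cnj (x z)) + integral\<^sup>L circ_measure (\<lambda>z. y z * cnj (y z)))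
       - (integral\<^sup>L circ_measure (\<lambda>z. x z * cnj (y z)) + integral\<^sup>L circ_measure (\<lambda>z. y z * cnj (x z)))"
    using i1 i2 i3 i4 by (simp add: Bochner_Integration.integral_add Bochner_Integration.integral_diff)
  also have "\<dots> = integral\<^sup>L circ_measure (\<lambda>z. complex_of_real ((cmod (x z))\<^sup>2)) +
       integral\<^sup>L circ_measure (\<lambda>z. complex_of_real ((cmod (y z))\<^sup>2))"
    unfolding sq_cmod_c o o2 by simp
  also have "\<dots> = complex_of_real (integral\<^sup>L circ_measure (\<lambda>z. (cmod (x z))\<^sup>2) + integral\<^sup>L circ_measure (\<lambda>z. (cmod (y z))\<^sup>2))"
    by (simp only: integral_complex_of_real of_real_add)
  finally show ?thesis by (simp only: of_real_eq_iff)
qed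

lemma tp_filter: "tp (filter P L) z + tp (filter (\<lambda>x. \<not> P x) L) z = tp L z"
  by (induction L) (auto simp: algebra_simps)

lemma AE_cnj_zpowi: "AE z in circ_measure. cnj (z powi m) = z powi (- m)"
  using AE_circle
proof eventually_elim
  case (elim z)
  then have "cnj z = z powi (-1)" by (rule circ_cnj)
  then have "cnj z = inverse z" by (simp add: power_int_minus)
  then have "cnj (z powi m) = inverse z powi m" by (simp add: power_int_def)
  then show ?case by (simp add: power_int_minus power_int_inverse)
qed

lemma int_zpowi_cnj: "integral\<^sup>L circ_measure (\<lambda>z. z powi n * cnj (z powi m)) = (if n = m then 1 else 0)"
proof -
  have "AE z in circ_measure. z powi n * cnj (z powi m) = z powi (n - m)"
    using AE_cnj_zpowi[of m] AE_circ_inv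
  proof eventually_elim
    case (elim z)
    then show ?case by (simp add: power_int_add[symmetric])
  qed
  then have "integral\<^sup>L circ_measure (\<lambda>z. z powi n * cnj (z powi m)) = integral\<^sup>L circ_measure (\<lambda>z. z powi (n - m))"
    by (intro integral_cong_AE) auto
  then show ?thesis by (simp add: integral_zpowi)
qed

lemma zpowi_L2: "(\<lambda>z. z powi n) \<in> L2"
  by (rule L2_bounded[OF powi_meas AE_zpowi_bound])

lemma ip_tp_zero:
  assumes "\<forall>(n,c)\<in>set L. \<forall>(m,d)\<in>set M. n \<noteq> m"
  shows "integral\<^sup>L circ_measure (\<lambda>z. tp L z * cnj (tp M z)) = 0"
  using assms
proof (induction L)
  case Nil then show ?case by simp
next
  case (Cons a L)
  obtain n c where a: "a = (n, c)" by (cases a)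
  have h1: "integral\<^sup>L circ_measure (\<lambda>z. z powi n * cnj (tp M z)) = 0"
    if "\<forall>(m,d)\<in>set M. n \<noteq> m" for M
    using that
  proof (induction M)
    case Nil then show ?case by simp
  next
    case (Cons b M)
    obtain m d where b: "b = (m, d)" by (cases b)
    have j1: "integrable circ_measure (\<lambda>z. z powi n * cnj (z powi m))"
      using L2_integrable_mult[OF zpowi_L2 L2_cnj[OF zpowi_L2]] .
    have j2: "integrable circ_measure (\<lambda>z. z powi n * cnj (tp M z))"
      using L2_integrable_mult[OF zpowi_L2 L2_cnj[OF tp_L2]] .
    have "(\<lambda>z. z powi n * cnj (tp (b # M) z)) = (\<lambda>z. cnj d * (z powi n * cnj (z powi m)) + z powi n * cnj (tp M z))"
      by (auto simp: b algebra_simps)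
    then have "integral\<^sup>L circ_measure (\<lambda>z. z powi n * cnj (tp (b # M) z)) =
        cnj d * integral\<^sup>L circ_measure (\<lambda>z. z powi n * cnj (z powi m)) + integral\<^sup>L circ_measure (\<lambda>z. z powi n * cnj (tp M z))"
      using j1 j2 by (simp add: Bochner_Integration.integral_add)
    also have "\<dots> = 0" using Cons b by (simp add: int_zpowi_cnj)
    finally show ?case .
  qed
  have j1: "integrable circ_measure (\<lambda>z. z powi n * cnj (tp M z))"
    using L2_integrable_mult[OF zpowi_L2 L2_cnj[OF tp_L2]] .
  have j2: "integrable circ_measure (\<lambda>z. tp L z * cnj (tp M z))"
    using L2_integrable_mult[OF tp_L2 L2_cnj[OF tp_L2]] .
  have "(\<lambda>z. tp (a # L) z * cnj (tp M z)) = (\<lambda>z. c * (z powi n * cnj (tp M z)) + tp L z * cnj (tp M z))"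
    by (auto simp: a algebra_simps)
  then have "integral\<^sup>L circ_measure (\<lambda>z. tp (a # L) z * cnj (tp M z)) =
      c * integral\<^sup>L circ_measure (\<lambda>z. z powi n * cnj (tp M z)) + integral\<^sup>L circ_measure (\<lambda>z. tp L z * cnj (tp M z))"
    using j1 j2 by (simp add: Bochner_Integration.integral_add)
  also have "\<dots> = 0" using Cons a h1 by auto
  finally show ?case .
qed

lemma ip_tp_orth:
  assumes f: "f \<in> L2" and o: "\<And>n c. (n, c) \<in> set L \<Longrightarrow> integral\<^sup>L circ_measure (\<lambda>z. f z * cnj (z powi n)) = 0"
  shows "integral\<^sup>L circ_measure (\<lambda>z. f z * cnj (tp L z)) = 0"
  using o
proof (induction L)
  case Nil then show ?case by simp
next
  case (Cons a L)
  obtain n c where a: "a = (n, c)" by (cases a)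
  have j1: "integrable circ_measure (\<lambda>z. f z * cnj (z powi n))"
    using L2_integrable_mult[OF f L2_cnj[OF zpowi_L2]] .
  have j2: "integrable circ_measure (\<lambda>z. f z * cnj (tp L z))"
    using L2_integrable_mult[OF f L2_cnj[OF tp_L2]] .
  have "(\<lambda>z. f z * cnj (tp (a # L) z)) = (\<lambda>z. cnj c * (f z * cnj (z powi n)) + f z * cnj (tp L z))"
    by (auto simp: a algebra_simps)
  then have "integral\<^sup>L circ_measure (\<lambda>z. f z * cnj (tp (a # L) z)) =
      cnj c * integral\<^sup>L circ_measure (\<lambda>z. f z * cnj (z powi n)) + integral\<^sup>L circ_measure (\<lambda>z. f z * cnj (tp L z))"
    using j1 j2 by (simp add: Bochner_Integration.integral_add)
  also have "\<dots> = 0"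
  proof -
    have "integral\<^sup>L circ_measure (\<lambda>z. f z * cnj (z powi n)) = 0" using Cons.prems[of n c] a by simp
    moreover have "integral\<^sup>L circ_measure (\<lambda>z. f z * cnj (tp L z)) = 0"
      using Cons.prems by (intro Cons.IH) auto
    ultimately show ?thesis by simp
  qed
  finally show ?case .
qed


lemma integral_zpow: "integral\<^sup>L circ_measure (\<lambda>z. z ^ k) = (if k = 0 then 1 else 0)"
  using integral_zpowi[of "int k"] by (simp add: power_int_of_nat)

lemma AE_cnj_pow_bound: "AE z in circ_measure. cmod (cnj z ^ k) \<le> 1"
  using AE_circle by eventually_elim (simp add: norm_power)

lemma uv_le: "u * v \<le> t * u\<^sup>2 / 2 + v\<^sup>2 / (2 * t)" if "t > 0" for u v t :: real
proof -
  have eq: "t * u\<^sup>2 / 2 + v\<^sup>2 / (2 * t) - u * v = (t * u - v)\<^sup>2 / (2 * t)"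
    using that by (simp add: field_simps power2_eq_square)
  have "(t * u - v)\<^sup>2 / (2 * t) \<ge> 0" using that by simp
  then show ?thesis using eq by linarith
qed

lemma prod_analytic:
  assumes a: "a \<in> hardy2" and b: "b \<in> hardy2" and k: "k > 0"
  shows "integral\<^sup>L circ_measure (\<lambda>z. a z * b z * z ^ k) = 0"
proof -
  have aL: "a \<in> L2" and bL: "b \<in> L2" using a b by (auto simp: hardy2_L2)
  define h where "h z = cnj z ^ k * cnj (b z)" for z
  have hL: "h \<in> L2" unfolding h_def
    by (rule L2_bmult[OF _ AE_cnj_pow_bound L2_cnj[OF bL]]) simp
  have eqI: "(\<lambda>z. a z * b z * z ^ k) = (\<lambda>z. a z * cnj (h z))" by (auto simp: h_def)
  have orth_h: "integral\<^sup>L circ_measure (\<lambda>z. h z * cnj (z powi n)) = 0" if n: "\<not> n < 0" for n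
  proof -
    have "AE z in circ_measure. h z * cnj (z powi n) = cnj (b z * z ^ (k + nat n))"
      using AE_circ_inv
    proof eventually_elim
      case (elim z)
      have "z powi n = z ^ nat n" using n by (simp add: power_int_def)
      then show ?case by (simp add: h_def power_add)
    qed
    then have "integral\<^sup>L circ_measure (\<lambda>z. h z * cnj (z powi n)) = integral\<^sup>L circ_measure (\<lambda>z. cnj (b z * z ^ (k + nat n)))"
      using bL hL by (intro integral_cong_AE) (auto simp: L2_meas)
    also have "\<dots> = cnj (integral\<^sup>L circ_measure (\<lambda>z. b z * z ^ (k + nat n)))" by (rule Bochner_Integration.integral_cnj)
    also have "\<dots> = 0" using hardy2_coef[OF b, of "k + nat n"] k by simp
    finally show ?thesis .
  qed
  have orth_a: "integral\<^sup>L circ_measure (\<lambda>z. a z * cnj (z powi m)) = 0" if m: "m < 0" for m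
  proof -
    have "AE z in circ_measure. a z * cnj (z powi m) = a z * z ^ nat (- m)"
      using AE_cnj_zpowi[of m]
    proof eventually_elim
      case (elim z)
      have "z powi (- m) = z ^ nat (- m)" using m by (simp add: power_int_def)
      then show ?case using elim by simp
    qed
    then have "integral\<^sup>L circ_measure (\<lambda>z. a z * cnj (z powi m)) = integral\<^sup>L circ_measure (\<lambda>z. a z * z ^ nat (- m))"
      using aL by (intro integral_cong_AE) (auto simp: L2_meas)
    also have "\<dots> = 0" using hardy2_coef[OF a, of "nat (- m)"] m by simp
    finally show ?thesis .
  qed
  define I where "I = integral\<^sup>L circ_measure (\<lambda>z. a z * cnj (h z))"
  define A where "A = integral\<^sup>L circ_measure (\<lambda>z. (cmod (a z))\<^sup>2)"
  have A: "A \<ge> 0" unfolding A_def by simp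
  have small: "cmod I \<le> e" if e: "e > 0" for e
  proof -
    define t where "t = e / (A + 1)"
    have t: "t > 0" unfolding t_def using e A by simp
    define \<delta> where "\<delta> = e * t"
    have d: "\<delta> > 0" unfolding \<delta>_def using e t by simp
    obtain L where L: "integral\<^sup>L circ_measure (\<lambda>z. (cmod (h z - tp L z))\<^sup>2) < \<delta>"
      using L2_density[OF hL d] by blast
    define P where "P = (\<lambda>x :: int \<times> complex. fst x < 0)"
    define Ln where "Ln = filter P L"
    define Lp where "Lp = filter (\<lambda>x. \<not> P x) L"
    have split: "tp Ln z + tp Lp z = tp L z" for z unfolding Ln_def Lp_def by (rule tp_filter)
    define x where "x z = h z - tp Ln z" for z
    have xL: "x \<in> L2" unfolding x_def by (rule L2_diff[OF hL tp_L2])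
    have xy: "x z - tp Lp z = h z - tp L z" for z unfolding x_def using split[of z] by (simp add: algebra_simps)
    have o1: "integral\<^sup>L circ_measure (\<lambda>z. h z * cnj (tp Lp z)) = 0"
      by (rule ip_tp_orth[OF hL]) (auto simp: Lp_def P_def intro: orth_h)
    have o2: "integral\<^sup>L circ_measure (\<lambda>z. tp Ln z * cnj (tp Lp z)) = 0"
      by (rule ip_tp_zero) (auto simp: Ln_def Lp_def P_def)
    have oxy: "integral\<^sup>L circ_measure (\<lambda>z. x z * cnj (tp Lp z)) = 0"
    proof -
      have "integral\<^sup>L circ_measure (\<lambda>z. x z * cnj (tp Lp z)) =
          integral\<^sup>L circ_measure (\<lambda>z. h z * cnj (tp Lp z) - tp Ln z * cnj (tp Lp z))"
        unfolding x_def by (simp add: algebra_simps)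
      also have "\<dots> = integral\<^sup>L circ_measure (\<lambda>z. h z * cnj (tp Lp z)) - integral\<^sup>L circ_measure (\<lambda>z. tp Ln z * cnj (tp Lp z))"
        by (rule Bochner_Integration.integral_diff)
           (auto intro!: L2_integrable_mult L2_cnj tp_L2 hL)
      finally show ?thesis using o1 o2 by simp
    qed
    have "integral\<^sup>L circ_measure (\<lambda>z. (cmod (x z - tp Lp z))\<^sup>2) =
        integral\<^sup>L circ_measure (\<lambda>z. (cmod (x z))\<^sup>2) + integral\<^sup>L circ_measure (\<lambda>z. (cmod (tp Lp z))\<^sup>2)"
      by (rule pyth[OF xL tp_L2 oxy])
    moreover have "integral\<^sup>L circ_measure (\<lambda>z. (cmod (tp Lp z))\<^sup>2) \<ge> 0" by simp
    ultimately have X: "integral\<^sup>L circ_measure (\<lambda>z. (cmod (x z))\<^sup>2) < \<delta>"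
      using L unfolding xy by linarith
    have oa: "integral\<^sup>L circ_measure (\<lambda>z. a z * cnj (tp Ln z)) = 0"
      by (rule ip_tp_orth[OF aL]) (auto simp: Ln_def P_def intro: orth_a)
    have ia1: "integrable circ_measure (\<lambda>z. a z * cnj (x z))" by (rule L2_integrable_mult[OF aL L2_cnj[OF xL]])
    have ia2: "integrable circ_measure (\<lambda>z. a z * cnj (tp Ln z))" by (rule L2_integrable_mult[OF aL L2_cnj[OF tp_L2]])
    have "I = integral\<^sup>L circ_measure (\<lambda>z. a z * cnj (x z) + a z * cnj (tp Ln z))"
      unfolding I_def x_def by (simp add: algebra_simps)
    also have "\<dots> = integral\<^sup>L circ_measure (\<lambda>z. a z * cnj (x z))"
      using ia1 ia2 oa by (simp add: Bochner_Integration.integral_add)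
    finally have Ieq: "I = integral\<^sup>L circ_measure (\<lambda>z. a z * cnj (x z))" .
    have sqa: "integrable circ_measure (\<lambda>z. (cmod (a z))\<^sup>2)" by (rule L2_sq_int[OF aL])
    have sqx: "integrable circ_measure (\<lambda>z. (cmod (x z))\<^sup>2)" by (rule L2_sq_int[OF xL])
    have "cmod I \<le> integral\<^sup>L circ_measure (\<lambda>z. cmod (a z * cnj (x z)))"
      unfolding Ieq by (rule integral_norm_bound)
    also have "\<dots> \<le> integral\<^sup>L circ_measure (\<lambda>z. t * (cmod (a z))\<^sup>2 / 2 + (cmod (x z))\<^sup>2 / (2 * t))"
    proof (rule integral_mono)
      show "integrable circ_measure (\<lambda>z. cmod (a z * cnj (x z)))" using ia1 by simp
      show "integrable circ_measure (\<lambda>z. t * (cmod (a z))\<^sup>2 / 2 + (cmod (x z))\<^sup>2 / (2 * t))"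
        using sqa sqx by simp
      show "cmod (a z * cnj (x z)) \<le> t * (cmod (a z))\<^sup>2 / 2 + (cmod (x z))\<^sup>2 / (2 * t)" for z
        using uv_le[OF t, of "cmod (a z)" "cmod (x z)"] by (simp add: norm_mult)
    qed
    also have "\<dots> = t * A / 2 + integral\<^sup>L circ_measure (\<lambda>z. (cmod (x z))\<^sup>2) / (2 * t)"
      using sqa sqx by (simp add: Bochner_Integration.integral_add A_def)
    also have "\<dots> \<le> t * A / 2 + \<delta> / (2 * t)"
      using X t by (simp add: divide_right_mono)
    also have "\<dots> = e * (A / (A + 1)) / 2 + e / 2"
    proof -
      have q1: "\<delta> / (2 * t) = e / 2" using t unfolding \<delta>_def by simp
      have q2: "t * A / 2 = e * (A / (A + 1)) / 2" unfolding t_def by simp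
      show ?thesis by (simp only: q1 q2)
    qed
    also have "\<dots> \<le> e / 2 + e / 2"
    proof -
      have "A / (A + 1) \<le> 1" using A by simp
      then have "e * (A / (A + 1)) \<le> e * 1" using e by (intro mult_left_mono) auto
      then have "e * (A / (A + 1)) \<le> e" by simp
      then have "e * (A / (A + 1)) / 2 \<le> e / 2" by (rule divide_right_mono) simp
      then show ?thesis by (rule add_right_mono)
    qed
    finally show ?thesis by simp
  qed
  have "cmod I \<le> 0" by (rule field_le_epsilon) (use small in simp)
  then have "I = 0" by simp
  then show ?thesis unfolding eqI I_def .
qed


lemma hardy2I: "f \<in> L2 \<Longrightarrow> (\<And>k. k > 0 \<Longrightarrow> integral\<^sup>L circ_measure (\<lambda>z. f z * z ^ k) = 0) \<Longrightarrow> f \<in> hardy2"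
  unfolding hardy2_def by auto

lemma int_L2_pow: "f \<in> L2 \<Longrightarrow> integrable circ_measure (\<lambda>z. f z * z ^ k)"
  by (rule int_bmult[OF L2_integrable, of _ _ 1]) (use AE_circle in \<open>auto simp: norm_power elim!: AE_mp\<close>)

lemma hardy2_ae: "f \<in> hardy2 \<Longrightarrow> g \<in> borel_measurable borel \<Longrightarrow> ae_eq f g \<Longrightarrow> g \<in> hardy2"
proof (rule hardy2I)
  assume f: "f \<in> hardy2" and g: "g \<in> borel_measurable borel" and fg: "ae_eq f g"
  show gL: "g \<in> L2" by (rule L2_ae[OF hardy2_L2[OF f] g fg])
  fix k :: nat assume k: "k > 0"
  have "integral\<^sup>L circ_measure (\<lambda>z. g z * z ^ k) = integral\<^sup>L circ_measure (\<lambda>z. f z * z ^ k)"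
    using fg g hardy2_L2[OF f] unfolding ae_eq_def
    by (intro integral_cong_AE) (auto simp: L2_meas elim!: AE_mp)
  then show "integral\<^sup>L circ_measure (\<lambda>z. g z * z ^ k) = 0" using hardy2_coef[OF f k] by simp
qed

lemma hardy2_add: "f \<in> hardy2 \<Longrightarrow> g \<in> hardy2 \<Longrightarrow> (\<lambda>z. f z + g z) \<in> hardy2"
proof (rule hardy2I)
  assume f: "f \<in> hardy2" and g: "g \<in> hardy2"
  show "(\<lambda>z. f z + g z) \<in> L2" by (rule L2_add[OF hardy2_L2[OF f] hardy2_L2[OF g]])
  fix k :: nat assume k: "k > 0"
  have "integral\<^sup>L circ_measure (\<lambda>z. (f z + g z) * z ^ k) =
      integral\<^sup>L circ_measure (\<lambda>z. f z * z ^ k) + integral\<^sup>L circ_measure (\<lambda>z. g z * z ^ k)"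
    using int_L2_pow[OF hardy2_L2[OF f]] int_L2_pow[OF hardy2_L2[OF g]]
    by (simp add: distrib_right Bochner_Integration.integral_add)
  then show "integral\<^sup>L circ_measure (\<lambda>z. (f z + g z) * z ^ k) = 0"
    using hardy2_coef[OF f k] hardy2_coef[OF g k] by simp
qed

lemma hardy2_cmult: "f \<in> hardy2 \<Longrightarrow> (\<lambda>z. c * f z) \<in> hardy2"
proof (rule hardy2I)
  assume f: "f \<in> hardy2"
  show "(\<lambda>z. c * f z) \<in> L2" by (rule L2_cmult[OF hardy2_L2[OF f]])
  fix k :: nat assume k: "k > 0"
  have "integral\<^sup>L circ_measure (\<lambda>z. c * f z * z ^ k) = c * integral\<^sup>L circ_measure (\<lambda>z. f z * z ^ k)"
    by (simp add: mult.assoc)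
  then show "integral\<^sup>L circ_measure (\<lambda>z. c * f z * z ^ k) = 0" using hardy2_coef[OF f k] by simp
qed

lemma hardy2_diff: "f \<in> hardy2 \<Longrightarrow> g \<in> hardy2 \<Longrightarrow> (\<lambda>z. f z - g z) \<in> hardy2"
  using hardy2_add[of f "\<lambda>z. (-1) * g z"] hardy2_cmult[of g "-1"] by simp

lemma hardy2_const: "(\<lambda>z. c) \<in> hardy2"
proof (rule hardy2I)
  show "(\<lambda>z. c) \<in> L2" by simp
  fix k :: nat assume k: "k > 0"
  have "integral\<^sup>L circ_measure (\<lambda>z. c * z ^ k) = c * integral\<^sup>L circ_measure (\<lambda>z. z ^ k)" by simp
  then show "integral\<^sup>L circ_measure (\<lambda>z. c * z ^ k) = 0" using k by (simp add: integral_zpow)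
qed

lemma AE_z_bound: "AE z in circ_measure. cmod z \<le> 1"
  using AE_circle by eventually_elim simp

lemma hardy2_shift: "f \<in> hardy2 \<Longrightarrow> (\<lambda>z. z * f z) \<in> hardy2"
proof (rule hardy2I)
  assume f: "f \<in> hardy2"
  show "(\<lambda>z. z * f z) \<in> L2" by (rule L2_bmult[OF _ AE_z_bound hardy2_L2[OF f]]) simp
  fix k :: nat assume k: "k > 0"
  have "(\<lambda>z. z * f z * z ^ k) = (\<lambda>z. f z * z ^ Suc k)" by (auto simp: algebra_simps)
  then show "integral\<^sup>L circ_measure (\<lambda>z. z * f z * z ^ k) = 0" using hardy2_coef[OF f, of "Suc k"] by simp
qed

lemma inner_meas: "inner_fun \<theta> \<Longrightarrow> \<theta> \<in> borel_measurable borel"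
  unfolding inner_fun_def by simp

lemma inner_bound: "inner_fun \<theta> \<Longrightarrow> AE z in circ_measure. cmod (\<theta> z) \<le> 1"
  unfolding inner_fun_def by (auto elim!: AE_mp)

lemma inner_abs: "inner_fun \<theta> \<Longrightarrow> AE z in circ_measure. cmod (\<theta> z) = 1"
  unfolding inner_fun_def by auto

lemma inner_hardy2: "inner_fun \<theta> \<Longrightarrow> \<theta> \<in> hardy2"
proof -
  assume th: "inner_fun \<theta>"
  have "\<theta> \<in> L2" by (rule L2_bounded[OF inner_meas[OF th] inner_bound[OF th]])
  then show ?thesis using th unfolding inner_fun_def hardy2_def by blast
qed

lemma hardy2_bmult: "inner_fun \<theta> \<Longrightarrow> f \<in> hardy2 \<Longrightarrow> (\<lambda>z. \<theta> z * f z) \<in> hardy2"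
proof (rule hardy2I)
  assume th: "inner_fun \<theta>" and f: "f \<in> hardy2"
  show "(\<lambda>z. \<theta> z * f z) \<in> L2" by (rule L2_bmult[OF inner_meas[OF th] inner_bound[OF th] hardy2_L2[OF f]])
  fix k :: nat assume k: "k > 0"
  show "integral\<^sup>L circ_measure (\<lambda>z. \<theta> z * f z * z ^ k) = 0"
    by (rule prod_analytic[OF inner_hardy2[OF th] f k])
qed

lemma hardy2_unshift:
  assumes f: "f \<in> hardy2" and m: "integral\<^sup>L circ_measure f = 0"
  shows "(\<lambda>z. cnj z * f z) \<in> hardy2"
proof (rule hardy2I)
  show "(\<lambda>z. cnj z * f z) \<in> L2"
    by (rule L2_bmult[OF _ _ hardy2_L2[OF f], of _ 1]) (use AE_z_bound in auto)
  fix k :: nat assume k: "k > 0"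
  have "AE z in circ_measure. cnj z * f z * z ^ k = f z * z ^ (k - 1)"
    using AE_circ_inv
  proof eventually_elim
    case (elim z)
    have "z ^ k = z * z ^ (k - 1)" using k by (cases k) auto
    then show ?case using elim by (simp add: algebra_simps)
  qed
  then have "integral\<^sup>L circ_measure (\<lambda>z. cnj z * f z * z ^ k) = integral\<^sup>L circ_measure (\<lambda>z. f z * z ^ (k - 1))"
    using hardy2_L2[OF f] by (intro integral_cong_AE) (auto simp: L2_meas)
  also have "\<dots> = 0"
  proof (cases "k = 1")
    case True then show ?thesis using m by simp
  next
    case False then show ?thesis using hardy2_coef[OF f, of "k - 1"] k by simp
  qed
  finally show "integral\<^sup>L circ_measure (\<lambda>z. cnj z * f z * z ^ k) = 0" .
qed

lemma prod_mean:
  assumes a: "a \<in> hardy2" and b: "b \<in> hardy2"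
  shows "integral\<^sup>L circ_measure (\<lambda>z. a z * b z) = integral\<^sup>L circ_measure a * integral\<^sup>L circ_measure b"
proof -
  define a0 where "a0 = integral\<^sup>L circ_measure a"
  have ad: "(\<lambda>z. a z - a0) \<in> hardy2" by (rule hardy2_diff[OF a hardy2_const])
  have am: "integral\<^sup>L circ_measure (\<lambda>z. a z - a0) = 0"
    using L2_integrable[OF hardy2_L2[OF a]] by (simp add: a0_def Bochner_Integration.integral_diff)
  define a1 where "a1 z = cnj z * (a z - a0)" for z
  have a1: "a1 \<in> hardy2" unfolding a1_def by (rule hardy2_unshift[OF ad am])
  have "AE z in circ_measure. a z * b z = a0 * b z + a1 z * b z * z ^ 1"
    using AE_circ_inv
  proof eventually_elim
    case (elim z)
    then have "z * inverse z = 1" by simp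
    then show ?case using elim unfolding a1_def by (simp add: algebra_simps) (simp add: mult.assoc[symmetric])
  qed
  then have "integral\<^sup>L circ_measure (\<lambda>z. a z * b z) = integral\<^sup>L circ_measure (\<lambda>z. a0 * b z + a1 z * b z * z ^ 1)"
    using hardy2_L2[OF a] hardy2_L2[OF b] hardy2_L2[OF a1]
    by (intro integral_cong_AE) (auto simp: L2_meas)
  also have "\<dots> = a0 * integral\<^sup>L circ_measure b + integral\<^sup>L circ_measure (\<lambda>z. a1 z * b z * z ^ 1)"
  proof -
    have "integrable circ_measure (\<lambda>z. a1 z * (z * b z))"
      by (rule L2_integrable_mult[OF hardy2_L2[OF a1] hardy2_L2[OF hardy2_shift[OF b]]])
    then have i2: "integrable circ_measure (\<lambda>z. a1 z * b z * z ^ 1)" by (simp add: algebra_simps)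
    have i1: "integrable circ_measure (\<lambda>z. a0 * b z)" using L2_integrable[OF hardy2_L2[OF b]] by simp
    show ?thesis using i1 i2 by (simp add: Bochner_Integration.integral_add)
  qed
  also have "\<dots> = a0 * integral\<^sup>L circ_measure b"
    using prod_analytic[OF a1 b, of 1] by simp
  finally show ?thesis unfolding a0_def .
qed


lemma K_hardy: "f \<in> model_space \<theta> \<Longrightarrow> f \<in> hardy2"
  unfolding model_space_def by simp

lemma K_L2: "f \<in> model_space \<theta> \<Longrightarrow> f \<in> L2"
  by (rule hardy2_L2[OF K_hardy])

lemma K_orth: "f \<in> model_space \<theta> \<Longrightarrow> h \<in> hardy2 \<Longrightarrow> ip f (\<lambda>z. \<theta> z * h z) = 0"
  unfolding model_space_def by simp

lemma KI: "f \<in> hardy2 \<Longrightarrow> (\<And>h. h \<in> hardy2 \<Longrightarrow> ip f (\<lambda>z. \<theta> z * h z) = 0) \<Longrightarrow> f \<in> model_space \<theta>"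
  unfolding model_space_def by simp

lemma K_orth1: "f \<in> model_space \<theta> \<Longrightarrow> integral\<^sup>L circ_measure (\<lambda>z. f z * cnj (\<theta> z)) = 0"
  using K_orth[of f \<theta> "\<lambda>z. 1"] hardy2_const[of 1] unfolding ip_def by simp

lemma ip_L2_integrable: "f \<in> L2 \<Longrightarrow> g \<in> L2 \<Longrightarrow> integrable circ_measure (\<lambda>z. f z * cnj (g z))"
  by (rule L2_integrable_mult[OF _ L2_cnj])

lemma K_ae:
  assumes th: "inner_fun \<theta>" and f: "f \<in> model_space \<theta>" and g: "g \<in> borel_measurable borel" and fg: "ae_eq f g"
  shows "g \<in> model_space \<theta>"
proof (rule KI)
  show "g \<in> hardy2" by (rule hardy2_ae[OF K_hardy[OF f] g fg])
  fix h assume h: "h \<in> hardy2"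
  have "ip g (\<lambda>z. \<theta> z * h z) = ip f (\<lambda>z. \<theta> z * h z)"
    unfolding ip_def using fg g K_L2[OF f] hardy2_L2[OF h] inner_meas[OF th] unfolding ae_eq_def
    by (intro integral_cong_AE) (auto simp: L2_meas elim!: AE_mp)
  then show "ip g (\<lambda>z. \<theta> z * h z) = 0" using K_orth[OF f h] by simp
qed

lemma K_lin:
  assumes th: "inner_fun \<theta>" and f: "f \<in> model_space \<theta>" and g: "g \<in> model_space \<theta>"
  shows "(\<lambda>z. a * f z + b * g z) \<in> model_space \<theta>"
proof (rule KI)
  show "(\<lambda>z. a * f z + b * g z) \<in> hardy2"
    by (intro hardy2_add hardy2_cmult K_hardy[OF f] K_hardy[OF g])
  fix h assume h: "h \<in> hardy2"
  have thh: "(\<lambda>z. \<theta> z * h z) \<in> L2" by (rule hardy2_L2[OF hardy2_bmult[OF th h]])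
  have i1: "integrable circ_measure (\<lambda>z. f z * cnj (\<theta> z * h z))" by (rule ip_L2_integrable[OF K_L2[OF f] thh])
  have i2: "integrable circ_measure (\<lambda>z. g z * cnj (\<theta> z * h z))" by (rule ip_L2_integrable[OF K_L2[OF g] thh])
  have "ip (\<lambda>z. a * f z + b * g z) (\<lambda>z. \<theta> z * h z) = a * ip f (\<lambda>z. \<theta> z * h z) + b * ip g (\<lambda>z. \<theta> z * h z)"
    unfolding ip_def using i1 i2
    by (simp add: distrib_right mult.assoc Bochner_Integration.integral_add del: complex_cnj_mult)
  then show "ip (\<lambda>z. a * f z + b * g z) (\<lambda>z. \<theta> z * h z) = 0" using K_orth[OF f h] K_orth[OF g h] by simp
qed

lemma K_diff: "inner_fun \<theta> \<Longrightarrow> f \<in> model_space \<theta> \<Longrightarrow> g \<in> model_space \<theta> \<Longrightarrow> (\<lambda>z. f z - g z) \<in> model_space \<theta>"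
  using K_lin[of \<theta> f g 1 "-1"] by simp

lemma K_add: "inner_fun \<theta> \<Longrightarrow> f \<in> model_space \<theta> \<Longrightarrow> g \<in> model_space \<theta> \<Longrightarrow> (\<lambda>z. f z + g z) \<in> model_space \<theta>"
  using K_lin[of \<theta> f g 1 1] by simp

lemma const_K:
  assumes th: "inner_fun \<theta>" and v0: "value_at_0 \<theta> = 0"
  shows "(\<lambda>z. c) \<in> model_space \<theta>"
proof (rule KI)
  show "(\<lambda>z. c) \<in> hardy2" by (rule hardy2_const)
  fix h assume h: "h \<in> hardy2"
  have "ip (\<lambda>z. c) (\<lambda>z. \<theta> z * h z) = c * cnj (integral\<^sup>L circ_measure (\<lambda>z. \<theta> z * h z))"
    unfolding ip_def by (simp del: complex_cnj_mult)
  also have "integral\<^sup>L circ_measure (\<lambda>z. \<theta> z * h z) = integral\<^sup>L circ_measure \<theta> * integral\<^sup>L circ_measure h"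
    by (rule prod_mean[OF inner_hardy2[OF th] h])
  finally show "ip (\<lambda>z. c) (\<lambda>z. \<theta> z * h z) = 0" using v0 unfolding value_at_0_def by simp
qed

lemma sq_integral_zero:
  assumes "d \<in> L2" "integral\<^sup>L circ_measure (\<lambda>z. d z * cnj (d z)) = 0"
  shows "AE z in circ_measure. d z = 0"
proof -
  have "complex_of_real (integral\<^sup>L circ_measure (\<lambda>z. (cmod (d z))\<^sup>2)) = 0"
    using assms(2) unfolding integral_complex_of_real[symmetric] sq_cmod_c .
  then have "integral\<^sup>L circ_measure (\<lambda>z. (cmod (d z))\<^sup>2) = 0" by simp
  then have "AE z in circ_measure. (cmod (d z))\<^sup>2 = 0"
    using integral_nonneg_eq_0_iff_AE[OF L2_sq_int[OF assms(1)]] by simp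
  then show ?thesis by simp
qed


lemma cchi_L2: "inner_fun \<theta> \<Longrightarrow> cchi_mult \<theta> \<in> L2"
  unfolding cchi_mult_def
  by (rule L2_bmult[OF _ _ L2_bounded[OF inner_meas inner_bound]]) (use AE_z_bound in auto)

lemma hardy2_mean0_decomp:
  assumes h: "h \<in> hardy2"
  shows "(\<lambda>z. cnj z * (h z - integral\<^sup>L circ_measure h)) \<in> hardy2"
proof -
  have ad: "(\<lambda>z. h z - integral\<^sup>L circ_measure h) \<in> hardy2" by (rule hardy2_diff[OF h hardy2_const])
  have am: "integral\<^sup>L circ_measure (\<lambda>z. h z - integral\<^sup>L circ_measure h) = 0"
    using L2_integrable[OF hardy2_L2[OF h]] by (simp add: Bochner_Integration.integral_diff)
  show ?thesis by (rule hardy2_unshift[OF ad am])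
qed

lemma inner_sq: "inner_fun \<theta> \<Longrightarrow> AE z in circ_measure. \<theta> z * cnj (\<theta> z) = 1"
  using inner_abs
proof -
  assume th: "inner_fun \<theta>"
  show ?thesis using inner_abs[OF th]
  proof eventually_elim
    case (elim z)
    then show ?case using sq_cmod_c[of "\<theta> z"] by simp
  qed
qed

lemma comp_shift_ae:
  assumes th: "inner_fun \<theta>" and v0: "value_at_0 \<theta> = 0" and f: "f \<in> model_space \<theta>"
  shows "comp_shift \<theta> f \<in> model_space \<theta> \<and>
         ae_eq (comp_shift \<theta> f) (\<lambda>z. z * f z - ip f (cchi_mult \<theta>) * \<theta> z)"
proof -
  define c where "c = ip f (cchi_mult \<theta>)"
  define p where "p z = z * f z - c * \<theta> z" for z
  have fL: "f \<in> L2" by (rule K_L2[OF f])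
  have fH: "f \<in> hardy2" by (rule K_hardy[OF f])
  have thH: "\<theta> \<in> hardy2" by (rule inner_hardy2[OF th])
  have thL: "\<theta> \<in> L2" by (rule hardy2_L2[OF thH])
  define Pr where "Pr q \<longleftrightarrow> q \<in> model_space \<theta> \<and> (\<forall>k\<in>model_space \<theta>. ip (\<lambda>z. z * f z - q z) k = 0)" for q
  have pH: "p \<in> hardy2" unfolding p_def by (intro hardy2_diff hardy2_shift hardy2_cmult fH thH)
  have pL: "p \<in> L2" by (rule hardy2_L2[OF pH])
  have orth: "ip p (\<lambda>z. \<theta> z * h z) = 0" if h: "h \<in> hardy2" for h
  proof -
    define h0 where "h0 = integral\<^sup>L circ_measure h"
    define h1 where "h1 z = cnj z * (h z - h0)" for z
    have h1: "h1 \<in> hardy2" unfolding h1_def h0_def by (rule hardy2_mean0_decomp[OF h])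
    have h1L: "h1 \<in> L2" by (rule hardy2_L2[OF h1])
    have AE: "AE z in circ_measure. p z * cnj (\<theta> z * h z) =
        cnj h0 * (f z * cnj (cchi_mult \<theta> z)) + f z * cnj (\<theta> z * h1 z) - c * cnj h0 - c * cnj (h1 z * z ^ 1)"
      using AE_circ_inv inner_sq[OF th]
    proof eventually_elim
      case (elim z)
      then have e1: "z * cnj z = 1" and e2: "\<theta> z * cnj (\<theta> z) = 1" by auto
      show ?case unfolding p_def h1_def cchi_mult_def
        by (simp only: complex_cnj_mult complex_cnj_diff complex_cnj_cnj power_one_right)
           (use e1 e2 in algebra)
    qed
    have i1: "integrable circ_measure (\<lambda>z. f z * cnj (cchi_mult \<theta> z))" by (rule ip_L2_integrable[OF fL cchi_L2[OF th]])
    have thh1: "(\<lambda>z. \<theta> z * h1 z) \<in> L2" by (rule hardy2_L2[OF hardy2_bmult[OF th h1]])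
    have i2: "integrable circ_measure (\<lambda>z. f z * cnj (\<theta> z * h1 z))" by (rule ip_L2_integrable[OF fL thh1])
    have i3: "integrable circ_measure (\<lambda>z. cnj (h1 z * z ^ 1))" using int_L2_pow[OF h1L, of 1] by (rule integrable_cnj)
    have "ip p (\<lambda>z. \<theta> z * h z) = integral\<^sup>L circ_measure (\<lambda>z.
        cnj h0 * (f z * cnj (cchi_mult \<theta> z)) + f z * cnj (\<theta> z * h1 z) - c * cnj h0 - c * cnj (h1 z * z ^ 1))"
      unfolding ip_def using AE pL hardy2_L2[OF h] fL h1L inner_meas[OF th]
      by (intro integral_cong_AE) (auto simp: L2_meas cchi_mult_def)
    also have "\<dots> = cnj h0 * integral\<^sup>L circ_measure (\<lambda>z. f z * cnj (cchi_mult \<theta> z))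
        + integral\<^sup>L circ_measure (\<lambda>z. f z * cnj (\<theta> z * h1 z)) - c * cnj h0
        - c * integral\<^sup>L circ_measure (\<lambda>z. cnj (h1 z * z ^ 1))"
      using i1 i2 i3 by (simp add: Bochner_Integration.integral_add Bochner_Integration.integral_diff del: complex_cnj_mult)
    also have "integral\<^sup>L circ_measure (\<lambda>z. f z * cnj (cchi_mult \<theta> z)) = c"
      unfolding c_def ip_def ..
    also have "integral\<^sup>L circ_measure (\<lambda>z. f z * cnj (\<theta> z * h1 z)) = 0"
      using K_orth[OF f h1] unfolding ip_def .
    also have "integral\<^sup>L circ_measure (\<lambda>z. cnj (h1 z * z ^ 1)) = 0"
      using hardy2_coef[OF h1, of 1] by (simp only: Bochner_Integration.integral_cnj) simp
    finally show ?thesis by simp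
  qed
  have pK: "p \<in> model_space \<theta>" by (rule KI[OF pH orth])
  have Pp: "Pr p" unfolding Pr_def
  proof (intro conjI ballI pK)
    fix k assume k: "k \<in> model_space \<theta>"
    have "ip (\<lambda>z. z * f z - p z) k = integral\<^sup>L circ_measure (\<lambda>z. c * (\<theta> z * cnj (k z)))"
      unfolding ip_def p_def by (simp add: mult.assoc)
    also have "\<dots> = c * integral\<^sup>L circ_measure (\<lambda>z. \<theta> z * cnj (k z))" by simp
    also have "integral\<^sup>L circ_measure (\<lambda>z. \<theta> z * cnj (k z)) = integral\<^sup>L circ_measure (\<lambda>z. cnj (k z * cnj (\<theta> z)))"
      by (simp add: mult.commute)
    also have "\<dots> = cnj (integral\<^sup>L circ_measure (\<lambda>z. k z * cnj (\<theta> z)))" by (rule Bochner_Integration.integral_cnj)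
    finally have "ip (\<lambda>z. z * f z - p z) k = c * cnj (integral\<^sup>L circ_measure (\<lambda>z. k z * cnj (\<theta> z)))" .
    then show "ip (\<lambda>z. z * f z - p z) k = 0" using K_orth1[OF k] by simp
  qed
  define q where "q = comp_shift \<theta> f"
  have "Pr q" unfolding q_def comp_shift_def proj_def Pr_def using someI[of Pr p, OF Pp] unfolding Pr_def by simp
  then have qK: "q \<in> model_space \<theta>" and qo: "\<forall>k\<in>model_space \<theta>. ip (\<lambda>z. z * f z - q z) k = 0"
    unfolding Pr_def by auto
  have po: "\<forall>k\<in>model_space \<theta>. ip (\<lambda>z. z * f z - p z) k = 0" using Pp unfolding Pr_def by auto
  define d where "d z = q z - p z" for z
  have dK: "d \<in> model_space \<theta>" unfolding d_def by (rule K_diff[OF th qK pK])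
  have dL: "d \<in> L2" by (rule K_L2[OF dK])
  have zfL: "(\<lambda>z. z * f z) \<in> L2" by (rule hardy2_L2[OF hardy2_shift[OF fH]])
  have qL: "q \<in> L2" by (rule K_L2[OF qK])
  have j1: "integrable circ_measure (\<lambda>z. (z * f z - p z) * cnj (d z))" by (rule ip_L2_integrable[OF L2_diff[OF zfL pL] dL])
  have j2: "integrable circ_measure (\<lambda>z. (z * f z - q z) * cnj (d z))" by (rule ip_L2_integrable[OF L2_diff[OF zfL qL] dL])
  have "integral\<^sup>L circ_measure (\<lambda>z. d z * cnj (d z)) =
      integral\<^sup>L circ_measure (\<lambda>z. (z * f z - p z) * cnj (d z) - (z * f z - q z) * cnj (d z))"
    unfolding d_def by (simp add: algebra_simps del: complex_cnj_diff)
  also have "\<dots> = ip (\<lambda>z. z * f z - p z) d - ip (\<lambda>z. z * f z - q z) d"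
    unfolding ip_def using j1 j2 by (rule Bochner_Integration.integral_diff)
  also have "\<dots> = 0" using po qo dK by simp
  finally have "AE z in circ_measure. d z = 0" by (rule sq_integral_zero[OF dL])
  then have "ae_eq q p" unfolding ae_eq_def d_def by simp
  then show ?thesis using qK unfolding q_def p_def c_def by simp
qed


lemma ae_eq_trans: "ae_eq f g \<Longrightarrow> ae_eq g h \<Longrightarrow> ae_eq f h"
  unfolding ae_eq_def by (auto elim: AE_mp)

lemma ae_eq_sym: "ae_eq f g \<Longrightarrow> ae_eq g f"
  unfolding ae_eq_def by (auto elim: AE_mp)

lemma U_ae:
  assumes th: "inner_fun \<theta>" and v0: "value_at_0 \<theta> = 0" and f: "f \<in> model_space \<theta>"
  shows "clark_U \<theta> 1 f \<in> model_space \<theta> \<and>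
         ae_eq (clark_U \<theta> 1 f) (\<lambda>z. z * f z + ip f (cchi_mult \<theta>) * (1 - \<theta> z))"
proof -
  have cs: "comp_shift \<theta> f \<in> model_space \<theta>"
    and ae: "ae_eq (comp_shift \<theta> f) (\<lambda>z. z * f z - ip f (cchi_mult \<theta>) * \<theta> z)"
    using comp_shift_ae[OF th v0 f] by auto
  have eq: "clark_U \<theta> 1 f = (\<lambda>z. comp_shift \<theta> f z + ip f (cchi_mult \<theta>))"
    unfolding clark_U_def by simp
  have "clark_U \<theta> 1 f \<in> model_space \<theta>" unfolding eq by (rule K_add[OF th cs const_K[OF th v0]])
  moreover have "ae_eq (clark_U \<theta> 1 f) (\<lambda>z. z * f z + ip f (cchi_mult \<theta>) * (1 - \<theta> z))"
    using ae unfolding eq ae_eq_def by (auto elim!: AE_mp simp: algebra_simps)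
  ultimately show ?thesis by simp
qed

lemma U_surj:
  assumes th: "inner_fun \<theta>" and v0: "value_at_0 \<theta> = 0" and f: "f \<in> model_space \<theta>"
  shows "\<exists>g\<in>model_space \<theta>. ae_eq (clark_U \<theta> 1 g) f"
proof -
  have fH: "f \<in> hardy2" by (rule K_hardy[OF f])
  have fL: "f \<in> L2" by (rule K_L2[OF f])
  have thH: "\<theta> \<in> hardy2" by (rule inner_hardy2[OF th])
  have thmeas: "\<theta> \<in> borel_measurable borel" by (rule inner_meas[OF th])
  have th0: "integral\<^sup>L circ_measure \<theta> = 0" using v0 unfolding value_at_0_def .
  define a where "a = integral\<^sup>L circ_measure f"
  define F where "F z = f z - a + a * \<theta> z" for z
  have FH: "F \<in> hardy2" unfolding F_def by (intro hardy2_add hardy2_diff hardy2_cmult fH thH hardy2_const)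
  have FL: "F \<in> L2" by (rule hardy2_L2[OF FH])
  have F0: "integral\<^sup>L circ_measure F = 0"
  proof -
    have "integral\<^sup>L circ_measure F = integral\<^sup>L circ_measure f - a + a * integral\<^sup>L circ_measure \<theta>"
      unfolding F_def using L2_integrable[OF fL] L2_integrable[OF hardy2_L2[OF thH]]
      by (simp add: Bochner_Integration.integral_add Bochner_Integration.integral_diff)
    then show ?thesis using th0 unfolding a_def by simp
  qed
  define g where "g z = cnj z * F z" for z
  have gH: "g \<in> hardy2" unfolding g_def by (rule hardy2_unshift[OF FH F0])
  have gL: "g \<in> L2" by (rule hardy2_L2[OF gH])
  have gorth: "ip g (\<lambda>z. \<theta> z * k z) = 0" if k: "k \<in> hardy2" for k
  proof -
    have zk: "(\<lambda>z. z * k z) \<in> hardy2" by (rule hardy2_shift[OF k])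
    have tzk: "(\<lambda>z. \<theta> z * (z * k z)) \<in> L2" by (rule hardy2_L2[OF hardy2_bmult[OF th zk]])
    have AE: "AE z in circ_measure. g z * cnj (\<theta> z * k z) =
        f z * cnj (\<theta> z * (z * k z)) - a * cnj (\<theta> z * (z * k z)) + a * cnj (k z * z ^ 1)"
      using inner_sq[OF th]
    proof eventually_elim
      case (elim z)
      show ?case unfolding g_def F_def
        by (simp only: complex_cnj_mult complex_cnj_diff complex_cnj_add complex_cnj_cnj power_one_right)
           (use elim in algebra)
    qed
    have i1: "integrable circ_measure (\<lambda>z. f z * cnj (\<theta> z * (z * k z)))" by (rule ip_L2_integrable[OF fL tzk])
    have i2: "integrable circ_measure (\<lambda>z. cnj (\<theta> z * (z * k z)))" using L2_integrable[OF tzk] by (rule integrable_cnj)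
    have i3: "integrable circ_measure (\<lambda>z. cnj (k z * z ^ 1))"
      using int_L2_pow[OF hardy2_L2[OF k], of 1] by (rule integrable_cnj)
    have "ip g (\<lambda>z. \<theta> z * k z) = integral\<^sup>L circ_measure (\<lambda>z.
        f z * cnj (\<theta> z * (z * k z)) - a * cnj (\<theta> z * (z * k z)) + a * cnj (k z * z ^ 1))"
      unfolding ip_def using AE gL hardy2_L2[OF k] fL thmeas
      by (intro integral_cong_AE) (auto simp: L2_meas)
    also have "\<dots> = integral\<^sup>L circ_measure (\<lambda>z. f z * cnj (\<theta> z * (z * k z)))
        - a * integral\<^sup>L circ_measure (\<lambda>z. cnj (\<theta> z * (z * k z)))
        + a * integral\<^sup>L circ_measure (\<lambda>z. cnj (k z * z ^ 1))"
      using i1 i2 i3 by (simp add: Bochner_Integration.integral_add Bochner_Integration.integral_diff del: complex_cnj_mult)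
    also have "integral\<^sup>L circ_measure (\<lambda>z. f z * cnj (\<theta> z * (z * k z))) = 0"
      using K_orth[OF f zk] unfolding ip_def .
    also have "integral\<^sup>L circ_measure (\<lambda>z. cnj (\<theta> z * (z * k z))) = 0"
    proof -
      have "integral\<^sup>L circ_measure (\<lambda>z. \<theta> z * (z * k z)) = 0"
        using prod_mean[OF thH zk] th0 by simp
      then show ?thesis by (simp only: Bochner_Integration.integral_cnj) simp
    qed
    also have "integral\<^sup>L circ_measure (\<lambda>z. cnj (k z * z ^ 1)) = 0"
      using hardy2_coef[OF k, of 1] by (simp only: Bochner_Integration.integral_cnj) simp
    finally show ?thesis by simp
  qed
  have gK: "g \<in> model_space \<theta>" by (rule KI[OF gH gorth])
  have cg: "ip g (cchi_mult \<theta>) = a"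
  proof -
    have AE: "AE z in circ_measure. g z * cnj (cchi_mult \<theta> z) = f z * cnj (\<theta> z) - a * cnj (\<theta> z) + a"
      using inner_sq[OF th] AE_circ_inv
    proof eventually_elim
      case (elim z)
      then have e1: "z * cnj z = 1" and e2: "\<theta> z * cnj (\<theta> z) = 1" by auto
      show ?case unfolding g_def F_def cchi_mult_def
        by (simp only: complex_cnj_mult complex_cnj_diff complex_cnj_add complex_cnj_cnj)
           (use e1 e2 in algebra)
    qed
    have i1: "integrable circ_measure (\<lambda>z. f z * cnj (\<theta> z))" by (rule ip_L2_integrable[OF fL hardy2_L2[OF thH]])
    have i2: "integrable circ_measure (\<lambda>z. cnj (\<theta> z))" using L2_integrable[OF hardy2_L2[OF thH]] by (rule integrable_cnj)
    have "ip g (cchi_mult \<theta>) = integral\<^sup>L circ_measure (\<lambda>z. f z * cnj (\<theta> z) - a * cnj (\<theta> z) + a)"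
      unfolding ip_def using AE gL fL thmeas
      by (intro integral_cong_AE) (auto simp: L2_meas cchi_mult_def)
    also have "\<dots> = integral\<^sup>L circ_measure (\<lambda>z. f z * cnj (\<theta> z)) - a * integral\<^sup>L circ_measure (\<lambda>z. cnj (\<theta> z)) + a"
      using i1 i2 by (simp add: Bochner_Integration.integral_add Bochner_Integration.integral_diff del: integral_cnj)
    also have "integral\<^sup>L circ_measure (\<lambda>z. f z * cnj (\<theta> z)) = 0" by (rule K_orth1[OF f])
    also have "integral\<^sup>L circ_measure (\<lambda>z. cnj (\<theta> z)) = 0"
      using th0 by (simp only: Bochner_Integration.integral_cnj) simp
    finally show ?thesis by simp
  qed
  have "ae_eq (clark_U \<theta> 1 g) (\<lambda>z. z * g z + ip g (cchi_mult \<theta>) * (1 - \<theta> z))"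
    using U_ae[OF th v0 gK] by simp
  moreover have "ae_eq (\<lambda>z. z * g z + ip g (cchi_mult \<theta>) * (1 - \<theta> z)) f"
    unfolding ae_eq_def cg using AE_circ_inv
  proof eventually_elim
    case (elim z)
    then have e1: "z * cnj z = 1" by auto
    show ?case unfolding g_def F_def by (use e1 in algebra)
  qed
  ultimately show ?thesis using gK ae_eq_trans by blast
qed


lemma inner_pow_hardy: "inner_fun \<theta> \<Longrightarrow> (\<lambda>z. \<theta> z ^ n) \<in> hardy2"
proof (induction n)
  case 0 then show ?case using hardy2_const[of 1] by simp
next
  case (Suc n)
  then show ?case using hardy2_bmult[OF Suc.prems Suc.IH[OF Suc.prems]] by simp
qed

lemma inner_pow_mean:
  assumes th: "inner_fun \<theta>" and v0: "value_at_0 \<theta> = 0"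
  shows "integral\<^sup>L circ_measure (\<lambda>z. \<theta> z ^ Suc n) = 0"
proof -
  have "integral\<^sup>L circ_measure (\<lambda>z. \<theta> z * \<theta> z ^ n) = integral\<^sup>L circ_measure \<theta> * integral\<^sup>L circ_measure (\<lambda>z. \<theta> z ^ n)"
    by (rule prod_mean[OF inner_hardy2[OF th] inner_pow_hardy[OF th]])
  then show ?thesis using v0 unfolding value_at_0_def by simp
qed

lemma avg_lim:
  fixes w :: complex
  assumes w: "cmod w = 1" "w \<noteq> 1"
  shows "(\<lambda>N. (\<Sum>n<N. w ^ Suc n) / of_nat N) \<longlonglongrightarrow> 0"
proof (rule Lim_null_comparison)
  define C where "C = 2 / cmod (w - 1)"
  have wm: "cmod (w - 1) > 0" using w by simp
  show "eventually (\<lambda>N. norm ((\<Sum>n<N. w ^ Suc n) / of_nat N) \<le> C * inverse (real N)) sequentially"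
  proof (rule always_eventually, rule allI)
    fix N :: nat
    have "(\<Sum>n<N. w ^ Suc n) = w * ((w ^ N - 1) / (w - 1))"
      using geometric_sum[OF w(2), of N] by (simp add: sum_distrib_left[symmetric])
    then have "cmod (\<Sum>n<N. w ^ Suc n) = cmod (w ^ N - 1) / cmod (w - 1)"
      using w by (simp add: norm_mult norm_divide)
    also have "\<dots> \<le> 2 / cmod (w - 1)"
    proof (rule divide_right_mono)
      have "cmod (w ^ N - 1) \<le> cmod (w ^ N) + cmod (1::complex)" by (rule norm_triangle_ineq4)
      then show "cmod (w ^ N - 1) \<le> 2" using w by (simp add: norm_power)
    qed simp
    finally have b: "cmod (\<Sum>n<N. w ^ Suc n) \<le> C" unfolding C_def .
    show "norm ((\<Sum>n<N. w ^ Suc n) / of_nat N) \<le> C * inverse (real N)"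
    proof (cases "N = 0")
      case True then show ?thesis by simp
    next
      case False
      have "norm ((\<Sum>n<N. w ^ Suc n) / of_nat N) = cmod (\<Sum>n<N. w ^ Suc n) / real N"
        by (simp add: norm_divide)
      also have "\<dots> = cmod (\<Sum>n<N. w ^ Suc n) * inverse (real N)" by (simp add: divide_inverse)
      finally have "norm ((\<Sum>n<N. w ^ Suc n) / of_nat N) = cmod (\<Sum>n<N. w ^ Suc n) * inverse (real N)" .
      also have "\<dots> \<le> C * inverse (real N)" using b by (intro mult_right_mono) auto
      finally show ?thesis .
    qed
  qed
  show "(\<lambda>N. C * inverse (real N)) \<longlonglongrightarrow> 0"
    using tendsto_mult_right_zero[OF lim_inverse_n, of C] by simp
qed

lemma theta_ne1:
  assumes th: "inner_fun \<theta>" and v0: "value_at_0 \<theta> = 0"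
  shows "AE z in circ_measure. \<theta> z \<noteq> 1"
proof -
  have thmeas: "\<theta> \<in> borel_measurable borel" by (rule inner_meas[OF th])
  define E where "E = {z. \<theta> z = 1}"
  have Em: "E \<in> sets borel" unfolding E_def using thmeas by measurable
  define A where "A N z = (\<Sum>n<N. \<theta> z ^ Suc n) / of_nat N" for N z
  have Am: "A N \<in> borel_measurable borel" for N unfolding A_def using thmeas by measurable
  have ipow: "integrable circ_measure (\<lambda>z. \<theta> z ^ Suc n)" for n
    using L2_integrable[OF hardy2_L2[OF inner_pow_hardy[OF th]]] .
  have intA: "integral\<^sup>L circ_measure (A N) = 0" for N
  proof -
    have "integral\<^sup>L circ_measure (\<lambda>z. \<Sum>n<N. \<theta> z ^ Suc n) = (\<Sum>n<N. integral\<^sup>L circ_measure (\<lambda>z. \<theta> z ^ Suc n))"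
      by (rule Bochner_Integration.integral_sum) (rule ipow)
    also have "\<dots> = 0" using inner_pow_mean[OF th v0] by simp
    finally show ?thesis unfolding A_def by simp
  qed
  have "(\<lambda>N. integral\<^sup>L circ_measure (A N)) \<longlonglongrightarrow> integral\<^sup>L circ_measure (\<lambda>z. complex_of_real (indicator E z))"
  proof (rule integral_dominated_convergence[where w="\<lambda>z. 1"])
    show "(\<lambda>z. complex_of_real (indicator E z)) \<in> borel_measurable circ_measure" using Em by simp
    show "A N \<in> borel_measurable circ_measure" for N using Am by simp
    show "integrable circ_measure (\<lambda>z. 1::real)" by simp
    show "AE z in circ_measure. (\<lambda>N. A N z) \<longlonglongrightarrow> complex_of_real (indicator E z)"
      using inner_abs[OF th]
    proof eventually_elim
      case (elim z)
      show ?case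
      proof (cases "\<theta> z = 1")
        case True
        have "eventually (\<lambda>N. A N z = 1) sequentially"
          unfolding eventually_sequentially A_def using True by (intro exI[of _ 1]) auto
        then have "(\<lambda>N. A N z) \<longlonglongrightarrow> 1" by (rule tendsto_eventually)
        then show ?thesis using True by (simp add: E_def)
      next
        case False
        then show ?thesis using avg_lim[OF elim False] by (simp add: E_def A_def)
      qed
    qed
    show "AE z in circ_measure. norm (A N z) \<le> 1" for N
      using inner_abs[OF th]
    proof eventually_elim
      case (elim z)
      have "cmod (\<Sum>n<N. \<theta> z ^ Suc n) \<le> (\<Sum>n<N. cmod (\<theta> z ^ Suc n))" by (rule norm_sum)
      also have "\<dots> = real N" using elim by (simp add: norm_power norm_mult)
      finally have b: "cmod (\<Sum>n<N. \<theta> z ^ Suc n) \<le> real N" .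
      show ?case
      proof (cases "N = 0")
        case True then show ?thesis by (simp add: A_def)
      next
        case False
        then show ?thesis using b by (simp add: A_def norm_divide divide_le_eq)
      qed
    qed
  qed
  then have "integral\<^sup>L circ_measure (\<lambda>z. complex_of_real (indicator E z)) = 0"
    using intA by (simp add: LIMSEQ_const_iff)
  then have "measure circ_measure E = 0" using Em by simp
  then have "E \<in> null_sets circ_measure"
    using Em by (simp add: cm.emeasure_eq_measure null_sets_def)
  then have "AE z in circ_measure. z \<notin> E" by (rule AE_not_in)
  then show ?thesis unfolding E_def by simp
qed


theorem theorem3p5:
  fixes \<theta> \<omega> u :: "complex \<Rightarrow> complex"
    and X :: "(complex \<Rightarrow> complex) \<Rightarrow> (complex \<Rightarrow> complex)"
  assumes "inner_fun \<theta>" and "inner_fun \<omega>"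
    and "value_at_0 \<theta> = 0" and "value_at_0 \<omega> = 0"
    and "u \<in> model_space \<omega>"
    and "bounded_op (model_space \<theta>) (model_space \<omega>) X"
    and "\<forall>f \<in> model_space \<theta>. ip (X f) (cchi_mult \<omega>) = ip f (cchi_mult \<theta>)"
    and "\<forall>f \<in> model_space \<theta>.
           ae_eq (X (clark_U \<theta> 1 f))
                 (\<lambda>z. comp_shift \<omega> (X f) z + ip (X f) (cchi_mult \<omega>) * u z)"
  shows "(\<lambda>z. (u z - \<omega> z) / (1 - \<theta> z)) \<in> model_space \<omega> \<and>
         (\<forall>f \<in> model_space \<theta>. ae_eq (X f) (\<lambda>z. (u z - \<omega> z) / (1 - \<theta> z) * f z))"
proof -
  note th = assms(1) and om = assms(2) and v0 = assms(3) and w0 = assms(4) and uK = assms(5)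
  note h7 = assms(7) and h8 = assms(8)
  have Xin: "\<And>f. f \<in> model_space \<theta> \<Longrightarrow> X f \<in> model_space \<omega>"
    using assms(6) unfolding bounded_op_def by blast
  have Xae: "\<And>f g. f \<in> model_space \<theta> \<Longrightarrow> g \<in> model_space \<theta> \<Longrightarrow> ae_eq f g \<Longrightarrow> ae_eq (X f) (X g)"
    using assms(6) unfolding bounded_op_def by blast
  have uH: "u \<in> hardy2" by (rule K_hardy[OF uK])
  have uL: "u \<in> L2" by (rule hardy2_L2[OF uH])
  have thH: "\<theta> \<in> hardy2" by (rule inner_hardy2[OF th])
  have omH: "\<omega> \<in> hardy2" by (rule inner_hardy2[OF om])
  have thmeas: "\<theta> \<in> borel_measurable borel" by (rule inner_meas[OF th])
  have ommeas: "\<omega> \<in> borel_measurable borel" by (rule inner_meas[OF om])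
  define D where "D f z = (1 - \<theta> z) * X f z - (u z - \<omega> z) * f z" for f z
  have Dae: "ae_eq (D f) (D g)" if f: "f \<in> model_space \<theta>" and g: "g \<in> model_space \<theta>" and fg: "ae_eq f g" for f g
    using Xae[OF f g fg] fg unfolding ae_eq_def D_def by (auto elim: AE_mp)
  have DU: "ae_eq (D (clark_U \<theta> 1 f)) (\<lambda>z. z * D f z)" if f: "f \<in> model_space \<theta>" for f
  proof -
    define c where "c = ip f (cchi_mult \<theta>)"
    have Uf: "ae_eq (clark_U \<theta> 1 f) (\<lambda>z. z * f z + c * (1 - \<theta> z))"
      using U_ae[OF th v0 f] unfolding c_def by simp
    have XfK: "X f \<in> model_space \<omega>" by (rule Xin[OF f])
    have cs: "ae_eq (comp_shift \<omega> (X f)) (\<lambda>z. z * X f z - ip (X f) (cchi_mult \<omega>) * \<omega> z)"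
      using comp_shift_ae[OF om w0 XfK] by simp
    have cc: "ip (X f) (cchi_mult \<omega>) = c" using h7 f unfolding c_def by simp
    have XU: "ae_eq (X (clark_U \<theta> 1 f)) (\<lambda>z. comp_shift \<omega> (X f) z + c * u z)"
      using bspec[OF h8 f] unfolding cc .
    show ?thesis
      using Uf cs XU unfolding ae_eq_def cc
    proof (elim AE_mp, intro AE_I2 impI)
      fix z
      assume a1: "clark_U \<theta> 1 f z = z * f z + c * (1 - \<theta> z)"
        and a2: "comp_shift \<omega> (X f) z = z * X f z - c * \<omega> z"
        and a3: "X (clark_U \<theta> 1 f) z = comp_shift \<omega> (X f) z + c * u z"
      show "D (clark_U \<theta> 1 f) z = z * D f z"
        unfolding D_def a3 a1 a2 by (simp add: algebra_simps)
    qed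
  qed
  have Dint: "integrable circ_measure (D f)" if f: "f \<in> model_space \<theta>" for f
  proof -
    have fL: "f \<in> L2" by (rule K_L2[OF f])
    have XL: "X f \<in> L2" by (rule K_L2[OF Xin[OF f]])
    have "integrable circ_measure (\<lambda>z. 1 * X f z - \<theta> z * X f z - (u z * f z - \<omega> z * f z))"
      using L2_integrable[OF XL] L2_integrable_mult[OF hardy2_L2[OF thH] XL]
        L2_integrable_mult[OF uL fL] L2_integrable_mult[OF hardy2_L2[OF omH] fL]
      by (intro Bochner_Integration.integrable_diff) auto
    then show ?thesis unfolding D_def by (simp add: algebra_simps)
  qed
  have Dcoef: "integral\<^sup>L circ_measure (\<lambda>z. D f z * z ^ k) = 0" if f: "f \<in> model_space \<theta>" and k: "k > 0" for f k
  proof -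
    have fH: "f \<in> hardy2" by (rule K_hardy[OF f])
    have XH: "X f \<in> hardy2" by (rule K_hardy[OF Xin[OF f]])
    have fL: "f \<in> L2" by (rule hardy2_L2[OF fH])
    have XL: "X f \<in> L2" by (rule hardy2_L2[OF XH])
    have zk: "AE z in circ_measure. cmod (z ^ k) \<le> 1" using AE_circle by eventually_elim (simp add: norm_power)
    have "(\<lambda>z. z ^ k * f z) \<in> L2" by (rule L2_bmult[OF _ zk fL]) simp
    then have fk: "(\<lambda>z. f z * z ^ k) \<in> L2" by (simp add: mult.commute)
    have "(\<lambda>z. z ^ k * X f z) \<in> L2" by (rule L2_bmult[OF _ zk XL]) simp
    then have Xk: "(\<lambda>z. X f z * z ^ k) \<in> L2" by (simp add: mult.commute)
    have i1: "integrable circ_measure (\<lambda>z. X f z * z ^ k)" by (rule L2_integrable[OF Xk])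
    have i2: "integrable circ_measure (\<lambda>z. \<theta> z * (X f z * z ^ k))" by (rule L2_integrable_mult[OF hardy2_L2[OF thH] Xk])
    have i3: "integrable circ_measure (\<lambda>z. u z * (f z * z ^ k))" by (rule L2_integrable_mult[OF uL fk])
    have i4: "integrable circ_measure (\<lambda>z. \<omega> z * (f z * z ^ k))" by (rule L2_integrable_mult[OF hardy2_L2[OF omH] fk])
    have "integral\<^sup>L circ_measure (\<lambda>z. D f z * z ^ k) = integral\<^sup>L circ_measure (\<lambda>z.
        X f z * z ^ k - \<theta> z * (X f z * z ^ k) - (u z * (f z * z ^ k) - \<omega> z * (f z * z ^ k)))"
      unfolding D_def by (simp add: algebra_simps)
    also have "\<dots> = integral\<^sup>L circ_measure (\<lambda>z. X f z * z ^ k) - integral\<^sup>L circ_measure (\<lambda>z. \<theta> z * (X f z * z ^ k))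
        - (integral\<^sup>L circ_measure (\<lambda>z. u z * (f z * z ^ k)) - integral\<^sup>L circ_measure (\<lambda>z. \<omega> z * (f z * z ^ k)))"
      using i1 i2 i3 i4 by (simp add: Bochner_Integration.integral_diff)
    also have "\<dots> = 0"
      using hardy2_coef[OF XH k] prod_analytic[OF thH XH k] prod_analytic[OF uH fH k] prod_analytic[OF omH fH k]
      by (simp add: mult.assoc)
    finally show ?thesis .
  qed
  have Dshift: "\<exists>h\<in>model_space \<theta>. ae_eq (D f) (\<lambda>z. z ^ n * D h z)" if f: "f \<in> model_space \<theta>" for f n
  proof (induction n)
    case 0 then show ?case using f unfolding ae_eq_def by auto
  next
    case (Suc n)
    then obtain h where h: "h \<in> model_space \<theta>" "ae_eq (D f) (\<lambda>z. z ^ n * D h z)" by blast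
    obtain g where g: "g \<in> model_space \<theta>" "ae_eq (clark_U \<theta> 1 g) h" using U_surj[OF th v0 h(1)] by blast
    have UgK: "clark_U \<theta> 1 g \<in> model_space \<theta>" using U_ae[OF th v0 g(1)] by simp
    have "ae_eq (D h) (D (clark_U \<theta> 1 g))" by (rule Dae[OF h(1) UgK ae_eq_sym[OF g(2)]])
    then have "ae_eq (D h) (\<lambda>z. z * D g z)" using DU[OF g(1)] by (rule ae_eq_trans)
    then have "ae_eq (D f) (\<lambda>z. z ^ Suc n * D g z)"
      using h(2) unfolding ae_eq_def by (auto elim!: AE_mp)
    then show ?case using g(1) by blast
  qed
  have Dzero: "AE z in circ_measure. D f z = 0" if f: "f \<in> model_space \<theta>" for f
  proof (rule fourier_unique[OF Dint[OF f]])
    fix n :: int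
    show "integral\<^sup>L circ_measure (\<lambda>z. D f z * z powi n) = 0"
    proof (cases "n > 0")
      case True
      then have "(\<lambda>z. D f z * z powi n) = (\<lambda>z. D f z * z ^ nat n)" by (auto simp: power_int_def)
      then show ?thesis using Dcoef[OF f, of "nat n"] True by simp
    next
      case False
      define m where "m = nat (- n)"
      have nm: "n = - int m" unfolding m_def using False by simp
      obtain h where h: "h \<in> model_space \<theta>" "ae_eq (D f) (\<lambda>z. z ^ Suc m * D h z)" using Dshift[OF f] by blast
      have Dm: "D f \<in> borel_measurable borel" using Dint[OF f] by auto
      have Dhm: "D h \<in> borel_measurable borel" using Dint[OF h(1)] by auto
      have "AE z in circ_measure. D f z * z powi n = D h z * z ^ 1"
        using h(2) AE_circ_inv unfolding ae_eq_def
      proof eventually_elim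
        case (elim z)
        then have z0: "z \<noteq> 0" by auto
        have "z ^ Suc m * z powi n = z powi (int (Suc m) + n)"
          using z0 by (simp add: power_int_add power_int_of_nat)
        also have "\<dots> = z" using nm by simp
        finally show ?case using elim by (simp add: algebra_simps)
      qed
      then have "integral\<^sup>L circ_measure (\<lambda>z. D f z * z powi n) = integral\<^sup>L circ_measure (\<lambda>z. D h z * z ^ 1)"
        using Dm Dhm by (intro integral_cong_AE) auto
      also have "\<dots> = 0" by (rule Dcoef[OF h(1)]) simp
      finally show ?thesis .
    qed
  qed
  have ne1: "AE z in circ_measure. \<theta> z \<noteq> 1" by (rule theta_ne1[OF th v0])
  define g where "g z = (u z - \<omega> z) / (1 - \<theta> z)" for z
  have Xf: "ae_eq (X f) (\<lambda>z. g z * f z)" if f: "f \<in> model_space \<theta>" for f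
    unfolding ae_eq_def using Dzero[OF f] ne1
  proof eventually_elim
    case (elim z)
    then have "1 - \<theta> z \<noteq> 0" by simp
    then show ?case using elim(1) unfolding D_def g_def by (simp add: field_simps)
  qed
  have oneK: "(\<lambda>z. 1) \<in> model_space \<theta>" by (rule const_K[OF th v0])
  have gm: "g \<in> borel_measurable borel" unfolding g_def using L2_meas[OF uL] thmeas ommeas by measurable
  have "ae_eq (X (\<lambda>z. 1)) g" using Xf[OF oneK] by simp
  then have "g \<in> model_space \<omega>" by (rule K_ae[OF om Xin[OF oneK] gm])
  then show ?thesis using Xf unfolding g_def by blast
qed


end
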